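(* Let $m\ge n$, $1\le r\le n$, $\delta=r/n$, momentum $\mu\in[0,1)$, restart period $\tau\in\mathbb{Z}_{\ge1}$, number of nodes $N$ and horizon $T\ge1$. Suppose Assumptions (A1)–(A3) hold and let $\Delta F=f(\bm X_0)-\inf_{\bm X}f(\bm X)$. Then there is a choice of constant learning rate $\eta>0$ such that the iterates of PowerSGD+ with MSGD satisfy $$\frac1T\sum_{t=0}^{T-1}\mathbb{E}\big[\|\nabla f(\bm X_t)\|_F^2\big]\le\sqrt{\frac{32L\sigma^2\Delta F}{NT}}+\frac{8L\Delta F}{T}+\frac{6\sqrt[3]{274}\,(L\tau G\Delta F)^{2/3}}{T^{2/3}\delta^{2/3}(1-\mu)^{2/3}}.$$
   Context: Setting: $N$ nodes jointly minimize $f(\bm{X})=\frac1N\sum_{i=1}^N f_i(\bm{X})$ over $\bm{X}\in\mathbb{R}^{m\times n}$, where $f_i(\bm{X})=\mathbb{E}_{\xi^{(i)}\sim\mathcal{D}_i}[F(\bm{X};\xi^{(i)})]$; node $i$ queries stochastic gradients $\nabla F(\bm{X};\xi^{(i)})$, sampled independently across nodes and iterations. Assumptions: (A1) $f$ is bounded below and $L$-smooth ($\|\nabla f(\bm X)-\nabla f(\bm Y)\|_F\le L\|\bm X-\bm Y\|_F$). (A2) For each $i$, $\mathbb{E}[\nabla F(\bm{X};\xi^{(i)})]=\nabla f_i(\bm{X})$ and $\mathbb{E}\|\nabla F(\bm{X};\xi^{(i)})-\nabla f_i(\bm{X})\|_F^2\le\sigma^2$ for all $\bm X$. (A3) $\|\nabla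 f(\bm{X})\|_F^2\le\omega^2$ for all $\bm X$, and $\mathbb{E}\|\frac1N\sum_{i=1}^N\nabla F(\bm{X};\xi^{(i)})\|_F^2\le G^2:=\sigma^2+\omega^2$. $\mathrm{QR}(\bm A)$, for $\bm A\in\mathbb{R}^{m\times r}$, denotes the factor $\bm Q\in\mathbb{R}^{m\times r}$ with $\bm Q^\top\bm Q=I_r$ of an economic QR decomposition $\bm A=\bm Q\bm R$. PowerSGD+ with MSGD (step size $\eta$, momentum $\mu$, restart period $\tau$, rank $r$): initialize $\bm X_0\in\mathbb{R}^{m\times n}$, $\bm Q_{-1}\in\mathbb{R}^{n\times r}$, $\bm m_{-1}=0$, $\bm e_0^{(i)}=0$ for all $i$. For $t=0,\dots,T-1$: each node computes $\bm g_t^{(i)}=\nabla F(\bm X_t;\xi_t^{(i)})$ and $\bm\Delta_t^{(i)}=\bm g_t^{(i)}+\bm e_t^{(i)}$; let $\bm\Delta_t=\frac1N\sum_i\bm\Delta_t^{(i)}$. If $t\not\equiv0\pmod\tau$: $\tilde{\bm P}_t=\mathrm{QR}\big(\frac1N\sum_i\bm\Delta_t^{(i)}\bm Q_{t-1}\big)$; if $t\equiv0\pmod\tau$: $\tilde{\bm P}_t$ is the matrix of the first $r$ columns of $\bm U$ in an SVD $\bm\Delta_t=\bm U\bm\Sigma\bm V^\top$ (top-$r$ left singular vectors). In both cases $\bm Q_t=\frac1N\sum_i(\bm\Delta_t^{(i)})^\top\tilde{\bm P}_t$, $\widehat{\bm\Delta}_t^{(i)}=\tilde{\bm P}_t\tilde{\bm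 P}_t^\top\bm\Delta_t^{(i)}$, $\widehat{\bm\Delta}_t=\tilde{\bm P}_t\bm Q_t^\top$, $\bm e_{t+1}^{(i)}=\bm\Delta_t^{(i)}-\widehat{\bm\Delta}_t^{(i)}$, $\bm m_t=\mu\bm m_{t-1}+\widehat{\bm\Delta}_t$, $\bm X_{t+1}=\bm X_t-\eta\bm m_t$. *)

theory Defs
  imports "HOL-Probability.Probability"
begin

text \<open>Matrices in R^{m x n} are represented as real^'n^'m (rows indexed by 'm,
  columns by 'n); norm is then the Frobenius norm and inner product the
  Frobenius inner product.  Index types carry a well-order so that
  "first r columns" and "upper triangular" make sense.\<close>

definition idx :: "'a::{finite,wellorder} \<Rightarrow> nat" where
  "idx x = card {y. y < x}"

text \<open>Q is the Q-factor of an economic QR decomposition A = Q R (R upper triangular).\<close>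
definition is_econ_QR ::
  "real^('r::{finite,wellorder})^('m::{finite,wellorder}) \<Rightarrow> real^('r::{finite,wellorder})^('m::{finite,wellorder}) \<Rightarrow> bool" where
  "is_econ_QR A Q \<longleftrightarrow> transpose Q ** Q = mat 1 \<and>
     (\<exists>R. (\<forall>i j. j < i \<longrightarrow> R $ i $ j = 0) \<and> A = Q ** R)"

text \<open>P consists of the first r columns of U in an SVD A = U S V^T
  (singular values nonnegative, in nonincreasing order along the diagonal).\<close>
definition is_top_left_sv ::
  "real^('n::{finite,wellorder})^('m::{finite,wellorder}) \<Rightarrow> real^('r::{finite,wellorder})^('m::{finite,wellorder}) \<Rightarrow> bool" where
  "is_top_left_sv A P \<longleftrightarrow>
     (\<exists>(U::real^('m::{finite,wellorder})^('m::{finite,wellorder})) (S::real^('n::{finite,wellorder})^('m::{finite,wellorder})) (V::real^('n::{finite,wellorder})^('n::{finite,wellorder})).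
        orthogonal_matrix U \<and> orthogonal_matrix V \<and> A = U ** S ** transpose V \<and>
        (\<forall>i j. idx i \<noteq> idx j \<longrightarrow> S $ i $ j = 0) \<and>
        (\<forall>i j. 0 \<le> S $ i $ j) \<and>
        (\<forall>i j i' j'. idx i = idx j \<longrightarrow> idx i' = idx j' \<longrightarrow> idx i \<le> idx i'
            \<longrightarrow> S $ i' $ j' \<le> S $ i $ j) \<and>
        (\<forall>a k c. idx k = idx c \<longrightarrow> P $ a $ k = U $ a $ c))"

type_synonym ('n, 'm, 'r) pstate =
  "(real^'n^'m) \<times> (real^'r^'n) \<times> (real^'n^'m) \<times> (nat \<Rightarrow> real^'n^'m)"

text \<open>One iteration t of PowerSGD+ with MSGD. State (X_t, Q_{t-1}, m_{t-1}, e_t);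
  g i is the stochastic gradient of node i at X_t.\<close>
definition psgd_step ::
  "(real^'r^'m \<Rightarrow> real^'r^'m) \<Rightarrow> (real^'n^'m \<Rightarrow> real^'r^'m) \<Rightarrow> nat \<Rightarrow> real \<Rightarrow> real \<Rightarrow> nat
   \<Rightarrow> nat \<Rightarrow> (nat \<Rightarrow> real^'n^'m) \<Rightarrow> ('n, 'm, 'r) pstate \<Rightarrow> ('n, 'm, 'r) pstate" where
  "psgd_step qr svd \<tau> \<eta> \<mu> N t g s = (case s of (X, Q, mo, e) \<Rightarrow>
     let Di = (\<lambda>i. g i + e i);
         Dl = (1 / real N) *\<^sub>R (\<Sum>i<N. Di i);
         P = (if t mod \<tau> \<noteq> 0 then qr ((1 / real N) *\<^sub>R (\<Sum>i<N. Di i ** Q)) else svd Dl);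
         Qn = (1 / real N) *\<^sub>R (\<Sum>i<N. transpose (Di i) ** P);
         e' = (\<lambda>i. Di i - (P ** transpose P) ** Di i);
         mo' = \<mu> *\<^sub>R mo + P ** transpose Qn
     in (X - \<eta> *\<^sub>R mo', Qn, mo', e'))"

text \<open>State at iteration t for a realised sample path xs t i = xi_t^(i).\<close>
primrec psgd_state ::
  "(real^'r^'m \<Rightarrow> real^'r^'m) \<Rightarrow> (real^'n^'m \<Rightarrow> real^'r^'m) \<Rightarrow> nat \<Rightarrow> real \<Rightarrow> real \<Rightarrow> nat
   \<Rightarrow> (real^'n^'m \<Rightarrow> 'b \<Rightarrow> real^'n^'m) \<Rightarrow> real^'n^'m \<Rightarrow> real^'r^'n
   \<Rightarrow> (nat \<Rightarrow> nat \<Rightarrow> 'b) \<Rightarrow> nat \<Rightarrow> ('n, 'm, 'r) pstate" where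
  "psgd_state qr svd \<tau> \<eta> \<mu> N gF X0 Q0 xs 0 = (X0, Q0, 0, \<lambda>i. 0)"
| "psgd_state qr svd \<tau> \<eta> \<mu> N gF X0 Q0 xs (Suc t) =
     psgd_step qr svd \<tau> \<eta> \<mu> N t
       (\<lambda>i. gF (fst (psgd_state qr svd \<tau> \<eta> \<mu> N gF X0 Q0 xs t)) (xs t i))
       (psgd_state qr svd \<tau> \<eta> \<mu> N gF X0 Q0 xs t)"

text \<open>The iterate X_t.\<close>
definition psgd_X where
  "psgd_X qr svd \<tau> \<eta> \<mu> N gF X0 Q0 xs t = fst (psgd_state qr svd \<tau> \<eta> \<mu> N gF X0 Q0 xs t)"

end

theory Submission
  imports Defs
begin

(* ---- IDX ---- *)


lemma idx_strict_mono:
  fixes x y :: "'a::{finite,wellorder}"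
  assumes "x < y" shows "idx x < idx y"
proof -
  have "{z. z < x} \<subset> {z. z < y}" using assms by auto
  then show ?thesis unfolding idx_def by (intro psubset_card_mono) auto
qed

lemma idx_le_iff:
  fixes x y :: "'a::{finite,wellorder}"
  shows "idx x \<le> idx y \<longleftrightarrow> x \<le> y"
  by (metis idx_strict_mono leD le_less_linear order_le_less)

lemma idx_inj: "inj (idx :: 'a::{finite,wellorder} \<Rightarrow> nat)"
  by (metis idx_strict_mono injI less_irrefl neqE)

lemma idx_eq_iff:
  fixes x y :: "'a::{finite,wellorder}"
  shows "idx x = idx y \<longleftrightarrow> x = y"
  using idx_inj by (auto dest: injD)

lemma idx_less: "idx (x::'a::{finite,wellorder}) < CARD('a)"
proof -
  have "{z. z < x} \<subset> UNIV" by auto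
  then show ?thesis unfolding idx_def by (intro psubset_card_mono) auto
qed

lemma idx_bij: "bij_betw (idx :: 'a::{finite,wellorder} \<Rightarrow> nat) UNIV {..<CARD('a)}"
proof -
  have sub: "idx ` (UNIV::'a set) \<subseteq> {..<CARD('a)}" using idx_less by auto
  have "card (idx ` (UNIV::'a set)) = CARD('a)" by (rule card_image[OF idx_inj])
  then have "idx ` (UNIV::'a set) = {..<CARD('a)}"
    using sub by (intro card_subset_eq) auto
  then show ?thesis using idx_inj by (simp add: bij_betw_def)
qed

definition idx_inv :: "nat \<Rightarrow> 'a::{finite,wellorder}" where
  "idx_inv k = inv_into UNIV idx k"

lemma idx_inv_idx[simp]: "idx_inv (idx x) = (x::'a::{finite,wellorder})"
  unfolding idx_inv_def by (rule inv_into_f_f[OF idx_inj], simp)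

lemma idx_idx_inv: "k < CARD('a::{finite,wellorder}) \<Longrightarrow> idx (idx_inv k :: 'a) = k"
  unfolding idx_inv_def using idx_bij[where 'a='a]
  by (metis bij_betw_def f_inv_into_f lessThan_iff)

lemma sum_idx_reindex:
  "(\<Sum>x\<in>(UNIV::'a::{finite,wellorder} set). g (idx x)) = (\<Sum>k<CARD('a). g k)"
  by (rule sum.reindex_bij_betw[OF idx_bij])


(* ---- LA ---- *)


lemma inner_mat_sum:
  fixes X Y :: "real^'n^'m"
  shows "X \<bullet> Y = (\<Sum>i\<in>UNIV. \<Sum>j\<in>UNIV. X$i$j * Y$i$j)"
  by (simp add: inner_vec_def)

lemma adjL:
  fixes B :: "real^'k^'m" and C :: "real^'n^'k" and D :: "real^'n^'m"
  shows "(B ** C) \<bullet> D = C \<bullet> (transpose B ** D)"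
proof -
  have "(B ** C) \<bullet> D = (\<Sum>i\<in>UNIV. \<Sum>j\<in>UNIV. \<Sum>k\<in>UNIV. B$i$k * C$k$j * D$i$j)"
    by (simp add: inner_mat_sum matrix_matrix_mult_def sum_distrib_right)
  also have "\<dots> = (\<Sum>i\<in>UNIV. \<Sum>k\<in>UNIV. \<Sum>j\<in>UNIV. B$i$k * C$k$j * D$i$j)"
    by (rule sum.cong[OF refl], rule sum.swap)
  also have "\<dots> = (\<Sum>k\<in>UNIV. \<Sum>i\<in>UNIV. \<Sum>j\<in>UNIV. B$i$k * C$k$j * D$i$j)"
    by (rule sum.swap)
  also have "\<dots> = (\<Sum>k\<in>UNIV. \<Sum>j\<in>UNIV. \<Sum>i\<in>UNIV. B$i$k * C$k$j * D$i$j)"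
    by (rule sum.cong[OF refl], rule sum.swap)
  also have "\<dots> = C \<bullet> (transpose B ** D)"
    by (simp add: inner_mat_sum matrix_matrix_mult_def transpose_def sum_distrib_left mult.commute mult.left_commute)
  finally show ?thesis .
qed

lemma adjR:
  fixes B :: "real^'n^'k" and C :: "real^'k^'m" and D :: "real^'n^'m"
  shows "(C ** B) \<bullet> D = C \<bullet> (D ** transpose B)"
proof -
  have "(C ** B) \<bullet> D = (\<Sum>i\<in>UNIV. \<Sum>j\<in>UNIV. \<Sum>k\<in>UNIV. C$i$k * B$k$j * D$i$j)"
    by (simp add: inner_mat_sum matrix_matrix_mult_def sum_distrib_right)
  also have "\<dots> = (\<Sum>i\<in>UNIV. \<Sum>k\<in>UNIV. \<Sum>j\<in>UNIV. C$i$k * B$k$j * D$i$j)"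
    apply (rule sum.cong, simp) by (rule sum.swap)
  also have "\<dots> = C \<bullet> (D ** transpose B)"
    by (simp add: inner_mat_sum matrix_matrix_mult_def transpose_def sum_distrib_left mult.commute mult.left_commute)
  finally show ?thesis .
qed

lemma proj_pyth:
  fixes P :: "real^'r^'m" and A :: "real^'n^'m"
  assumes PP: "transpose P ** P = mat 1"
  shows "(norm ((P ** transpose P) ** A))\<^sup>2 + (norm (A - (P ** transpose P) ** A))\<^sup>2 = (norm A)\<^sup>2"
proof -
  let ?C = "transpose P ** A"
  have B: "(P ** transpose P) ** A = P ** ?C" by (simp add: matrix_mul_assoc)
  have "(P ** ?C) \<bullet> (P ** ?C) = ?C \<bullet> (transpose P ** (P ** ?C))"
    by (rule adjL)
  also have "transpose P ** (P ** ?C) = ?C"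
    by (simp only: matrix_mul_assoc PP matrix_mul_lid)
  also have "?C \<bullet> ?C = (P ** ?C) \<bullet> A"
    by (simp add: adjL)
  finally have "(P ** ?C) \<bullet> (A - P ** ?C) = 0" by (simp add: inner_diff_right)
  then have "(norm (P ** ?C + (A - P ** ?C)))\<^sup>2 = (norm (P ** ?C))\<^sup>2 + (norm (A - P ** ?C))\<^sup>2"
    using norm_add_Pythagorean[of "P ** ?C" "A - P ** ?C"] by (simp add: orthogonal_def)
  then show ?thesis by (simp add: B)
qed


(* ---- SVD ---- *)


lemma mm_diff_left: "(A - B) ** C = A ** C - B ** (C::real^'n^'k)"
  by (simp add: vec_eq_iff matrix_matrix_mult_def sum_subtractf algebra_simps)
lemma mm_diff_right: "A ** (B - C) = A ** B - A ** (C::real^'n^'k)"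
  by (simp add: vec_eq_iff matrix_matrix_mult_def sum_subtractf algebra_simps)
lemma mm_add_left: "(A + B) ** C = A ** C + B ** (C::real^'n^'k)"
  by (simp add: vec_eq_iff matrix_matrix_mult_def sum.distrib algebra_simps)
lemma mm_scaleR_left: "(c *\<^sub>R A) ** C = c *\<^sub>R (A ** (C::real^'n^'k))"
  by (simp add: vec_eq_iff matrix_matrix_mult_def sum_distrib_left algebra_simps)
lemma mm_scaleR_right: "A ** (c *\<^sub>R C) = c *\<^sub>R (A ** (C::real^'n^'k))"
  by (simp add: vec_eq_iff matrix_matrix_mult_def sum_distrib_left algebra_simps)
lemma mm_sum_left: "(\<Sum>i\<in>I. A i) ** C = (\<Sum>i\<in>I. A i ** (C::real^'n^'k))"
  by (induction I rule: infinite_finite_induct) (auto simp: mm_add_left)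
lemma mm_sum_right: "C ** (\<Sum>i\<in>I. A i) = (\<Sum>i\<in>I. C ** (A i::real^'n^'k))"
  by (induction I rule: infinite_finite_induct) (auto simp: matrix_add_ldistrib)
lemma transpose_add: "transpose (A + B) = transpose A + transpose (B::real^'n^'m)"
  by (simp add: vec_eq_iff transpose_def)
lemma transpose_scaleR: "transpose (c *\<^sub>R A) = c *\<^sub>R transpose (A::real^'n^'m)"
  by (simp add: vec_eq_iff transpose_def)
lemma transpose_zero: "transpose (0::real^'n^'m) = 0"
  by (simp add: vec_eq_iff transpose_def)
lemma transpose_sum: "transpose (\<Sum>i\<in>I. A i) = (\<Sum>i\<in>I. transpose (A i::real^'n^'m))"
  by (induction I rule: infinite_finite_induct) (auto simp: transpose_add transpose_zero)

lemma orth_left_cancel: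
  fixes U :: "real^'n^'n" and X :: "real^'n^'m"
  assumes "orthogonal_matrix U" shows "X ** transpose U ** U = X"
proof -
  have "X ** transpose U ** U = X ** (transpose U ** U)" by (rule matrix_mul_assoc[symmetric])
  also have "transpose U ** U = mat 1" using assms unfolding orthogonal_matrix_def by blast
  finally show ?thesis by (simp add: matrix_mul_rid)
qed

lemma norm_orth_mult:
  fixes U :: "real^'m^'m" and V :: "real^'n^'n" and B :: "real^'n^'m"
  assumes U: "orthogonal_matrix U" and V: "orthogonal_matrix V"
  shows "norm (U ** B ** transpose V) = norm B"
proof -
  have e1: "U ** B ** transpose V = U ** (B ** transpose V)" by (simp add: matrix_mul_assoc)
  have e2: "transpose U ** (U ** (B ** transpose V)) = B ** transpose V"
    using U by (simp only: matrix_mul_assoc orthogonal_matrix matrix_mul_lid)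
  have "(U ** B ** transpose V) \<bullet> (U ** B ** transpose V) = (B ** transpose V) \<bullet> (B ** transpose V)"
    unfolding e1 adjL e2 ..
  also have "\<dots> = B \<bullet> B"
    using V unfolding adjR transpose_transpose by (simp only: orth_left_cancel)
  finally show ?thesis by (simp add: norm_eq_sqrt_inner)
qed

lemma norm_sq_mat: "(norm (X::real^'n^'m))\<^sup>2 = (\<Sum>i\<in>UNIV. \<Sum>j\<in>UNIV. (X$i$j)\<^sup>2)"
  unfolding power2_norm_eq_inner inner_mat_sum by (simp add: power2_eq_square)

lemma top_avg:
  fixes t :: "nat \<Rightarrow> real" and r n m :: nat
  assumes nn: "\<And>k. 0 \<le> t k" and mono: "\<And>k k'. k \<le> k' \<Longrightarrow> t k' \<le> t k"
    and zero: "\<And>k. n \<le> k \<Longrightarrow> t k = 0" and r: "1 \<le> r" "r \<le> n" "n \<le> m"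
  shows "(\<Sum>k<m. if r \<le> k then t k else 0) \<le> (1 - real r / real n) * (\<Sum>k<m. t k)"
proof -
  define v where "v = t (r - 1)"
  define A where "A = (\<Sum>k<r. t k)"
  define B where "B = (\<Sum>k\<in>{r..<n}. t k)"
  have split1: "(\<Sum>k<m. t k) = A + B"
  proof -
    have "(\<Sum>k<m. t k) = (\<Sum>k<n. t k) + (\<Sum>k\<in>{n..<m}. t k)"
      using r by (metis lessThan_atLeast0 sum.atLeastLessThan_concat zero_le)
    also have "(\<Sum>k\<in>{n..<m}. t k) = 0" using zero by simp
    also have "(\<Sum>k<n. t k) = A + B" unfolding A_def B_def
      using r by (metis lessThan_atLeast0 sum.atLeastLessThan_concat zero_le)
    finally show ?thesis by simp
  qed
  have split2: "(\<Sum>k<m. if r \<le> k then t k else 0) = B"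
  proof -
    have "(\<Sum>k<m. if r \<le> k then t k else 0) = (\<Sum>k<m. if r \<le> k \<and> k < n then t k else 0)"
      using zero by (intro sum.cong) auto
    also have "\<dots> = (\<Sum>k\<in>{..<m} \<inter> {k. r \<le> k \<and> k < n}. t k)"
      by (simp add: sum.inter_restrict)
    also have "{..<m} \<inter> {k. r \<le> k \<and> k < n} = {r..<n}" using r by auto
    finally show ?thesis unfolding B_def .
  qed
  have Ab: "real r * v \<le> A" unfolding A_def v_def
    using sum_bounded_below[of "{..<r}" "t (r - 1)" t] mono r by auto
  have "\<And>i. i \<in> {r..<n} \<Longrightarrow> t i \<le> t (r - 1)" using mono by auto
  then have Bb: "B \<le> real (n - r) * v" unfolding B_def v_def
    using sum_bounded_above[of "{r..<n}" t "t (r - 1)"] by auto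
  have v0: "0 \<le> v" using nn v_def by simp
  have B0: "0 \<le> B" unfolding B_def using nn by (simp add: sum_nonneg)
  have "real r * B \<le> real r * (real (n - r) * v)" using Bb by (simp add: mult_left_mono)
  also have "\<dots> = real (n - r) * (real r * v)" by simp
  also have "\<dots> \<le> real (n - r) * A" using Ab by (simp add: mult_left_mono)
  finally have key: "real r * B \<le> real (n - r) * A" .
  have n0: "0 < real n" using r by simp
  have "B \<le> (1 - real r / real n) * (A + B)"
  proof -
    have "real n * B \<le> (real n - real r) * (A + B)"
      using key r by (simp add: of_nat_diff algebra_simps)
    then show ?thesis using n0 by (simp add: field_simps)
  qed
  then show ?thesis using split1 split2 by simp
qed


lemma svd_contract:
  fixes A :: "real^('n::{finite,wellorder})^('m::{finite,wellorder})"
    and P :: "real^('r::{finite,wellorder})^('m::{finite,wellorder})"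
  assumes sv: "is_top_left_sv A P" and rn: "CARD('r) \<le> CARD('n)" and nm: "CARD('n) \<le> CARD('m)"
  shows "transpose P ** P = mat 1"
    and "(norm (A - (P ** transpose P) ** A))\<^sup>2 \<le> (1 - real CARD('r) / real CARD('n)) * (norm A)\<^sup>2"
proof -
  obtain U :: "real^('m::{finite,wellorder})^('m::{finite,wellorder})" and S :: "real^('n::{finite,wellorder})^('m::{finite,wellorder})" and V :: "real^('n::{finite,wellorder})^('n::{finite,wellorder})" where
    U: "orthogonal_matrix U" and V: "orthogonal_matrix V" and Aeq: "A = U ** S ** transpose V"
    and Sdiag: "\<And>i j. idx i \<noteq> idx j \<Longrightarrow> S $ i $ j = 0"
    and Snn: "\<And>i j. 0 \<le> S $ i $ j"
    and Ssort: "\<And>i j i' j'. idx i = idx j \<Longrightarrow> idx i' = idx j' \<Longrightarrow> idx i \<le> idx i' \<Longrightarrow> S $ i' $ j' \<le> S $ i $ j"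
    and Pdef: "\<And>a k c. idx k = idx c \<Longrightarrow> P $ a $ k = U $ a $ c"
    using sv unfolding is_top_left_sv_def by blast
  define \<phi> :: "('r::{finite,wellorder}) \<Rightarrow> ('m::{finite,wellorder})" where "\<phi> k = idx_inv (idx k)" for k
  have idx\<phi>: "idx (\<phi> k) = idx k" for k
    unfolding \<phi>_def using idx_less[of k] rn nm by (intro idx_idx_inv) simp
  have \<phi>_iff: "\<phi> k = c \<longleftrightarrow> (idx c < CARD('r::{finite,wellorder}) \<and> k = idx_inv (idx c))" for k c
  proof
    assume "\<phi> k = c" then show "idx c < CARD('r::{finite,wellorder}) \<and> k = idx_inv (idx c)"
      using idx\<phi>[of k] idx_less[of k] by (metis idx_inv_idx)
  next
    assume "idx c < CARD('r::{finite,wellorder}) \<and> k = idx_inv (idx c)"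
    then have "idx k = idx c" by (simp add: idx_idx_inv)
    then show "\<phi> k = c" using idx\<phi>[of k] by (simp add: idx_eq_iff)
  qed
  define E :: "real^('r::{finite,wellorder})^('m::{finite,wellorder})" where "E = (\<chi> c k. if c = \<phi> k then 1 else 0)"
  have PUE: "P = U ** E"
  proof -
    have "(U ** E) $ a $ k = P $ a $ k" for a k
    proof -
      have "(U ** E) $ a $ k = (\<Sum>c\<in>UNIV. if c = \<phi> k then U $ a $ c else 0)"
        by (simp add: matrix_matrix_mult_def E_def if_distrib cong: if_cong)
      also have "\<dots> = U $ a $ \<phi> k" by (simp add: sum.delta)
      also have "\<dots> = P $ a $ k" using Pdef[of k "\<phi> k" a] idx\<phi>[of k] by simp
      finally show ?thesis .
    qed
    then show ?thesis by (simp add: vec_eq_iff)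
  qed
  have EE: "transpose E ** E = mat 1"
  proof -
    have "(transpose E ** E) $ k $ k' = mat 1 $ k $ k'" for k k'
    proof -
      have "(transpose E ** E) $ k $ k' = (\<Sum>c\<in>UNIV. (if c = \<phi> k then 1 else 0) * (if c = \<phi> k' then 1 else 0))"
        by (simp add: matrix_matrix_mult_def E_def transpose_def)
      also have "\<dots> = (\<Sum>c\<in>UNIV. if c = \<phi> k then (if \<phi> k = \<phi> k' then 1 else 0) else 0)"
        by (intro sum.cong) auto
      also have "\<dots> = (if \<phi> k = \<phi> k' then 1 else 0)" by (simp add: sum.delta)
      also have "\<phi> k = \<phi> k' \<longleftrightarrow> k = k'" using idx\<phi> by (metis idx_eq_iff)
      finally show ?thesis by (simp add: mat_def)
    qed
    then show ?thesis by (simp add: vec_eq_iff)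
  qed
  have UU: "transpose U ** U = mat 1" using U unfolding orthogonal_matrix_def by blast
  show PP: "transpose P ** P = mat 1"
  proof -
    have "transpose P ** P = transpose E ** (transpose U ** U) ** E"
      by (simp add: PUE matrix_transpose_mul matrix_mul_assoc)
    then show ?thesis by (simp add: UU matrix_mul_lid EE)
  qed
  define R where "R = S - E ** (transpose E ** S)"
  have resid: "A - (P ** transpose P) ** A = U ** R ** transpose V"
  proof -
    have "(P ** transpose P) ** A = U ** (E ** (transpose E ** S)) ** transpose V"
    proof -
      have "(P ** transpose P) ** A = U ** E ** transpose E ** (transpose U ** U) ** S ** transpose V"
        by (simp add: PUE Aeq matrix_transpose_mul matrix_mul_assoc)
      also have "\<dots> = U ** (E ** (transpose E ** S)) ** transpose V"
        by (simp add: UU matrix_mul_rid matrix_mul_assoc)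
      finally show ?thesis .
    qed
    then show ?thesis by (simp add: Aeq R_def mm_diff_left mm_diff_right)
  qed
  have Rent: "R $ c $ j = (if idx c < CARD('r::{finite,wellorder}) then 0 else S $ c $ j)" for c j
  proof -
    have inner: "(\<Sum>c'\<in>UNIV. (if c' = \<phi> k then 1 else 0) * S $ c' $ j) = S $ \<phi> k $ j" for k
    proof -
      have "(\<Sum>c'\<in>UNIV. (if c' = \<phi> k then 1 else 0) * S $ c' $ j) = (\<Sum>c'\<in>UNIV. if c' = \<phi> k then S $ c' $ j else 0)"
        by (intro sum.cong) auto
      then show ?thesis by (simp add: sum.delta)
    qed
    have "(E ** (transpose E ** S)) $ c $ j = (\<Sum>k\<in>UNIV. if \<phi> k = c then S $ c $ j else 0)"
    proof -
      have "(E ** (transpose E ** S)) $ c $ j = (\<Sum>k\<in>UNIV. (if c = \<phi> k then 1 else 0) * (\<Sum>c'\<in>UNIV. (if c' = \<phi> k then 1 else 0) * S $ c' $ j))"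
        by (simp add: matrix_matrix_mult_def E_def transpose_def)
      also have "\<dots> = (\<Sum>k\<in>UNIV. if \<phi> k = c then S $ c $ j else 0)"
        by (intro sum.cong refl) (auto simp: inner)
      finally show ?thesis .
    qed
    also have "\<dots> = (\<Sum>k\<in>UNIV. if k = (idx_inv (idx c) :: ('r::{finite,wellorder})) then (if idx c < CARD('r::{finite,wellorder}) then S $ c $ j else 0) else 0)"
      by (rule sum.cong) (auto simp: \<phi>_iff)
    also have "\<dots> = (if idx c < CARD('r::{finite,wellorder}) then S $ c $ j else 0)" by (simp add: sum.delta)
    finally show ?thesis by (simp add: R_def)
  qed
  define s where "s c = (\<Sum>j\<in>UNIV. (S $ c $ j)\<^sup>2)" for c
  have s_nn: "0 \<le> s c" for c unfolding s_def by (simp add: sum_nonneg)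
  have s_eq: "s c = (if idx c < CARD('n::{finite,wellorder}) then (S $ c $ (idx_inv (idx c) :: ('n::{finite,wellorder})))\<^sup>2 else 0)" for c
  proof -
    have "s c = (\<Sum>j\<in>UNIV. if j = (idx_inv (idx c) :: ('n::{finite,wellorder})) then (if idx c < CARD('n::{finite,wellorder}) then (S $ c $ (idx_inv (idx c) :: ('n::{finite,wellorder})))\<^sup>2 else 0) else 0)"
      unfolding s_def
    proof (intro sum.cong refl)
      fix j :: "'n::{finite,wellorder}"
      show "(S $ c $ j)\<^sup>2 = (if j = idx_inv (idx c) then (if idx c < CARD('n::{finite,wellorder}) then (S $ c $ (idx_inv (idx c) :: ('n::{finite,wellorder})))\<^sup>2 else 0) else 0)"
      proof (cases "idx c = idx j")
        case True
        then have "j = idx_inv (idx c)" by simp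
        moreover have "idx c < CARD('n::{finite,wellorder})" using True idx_less[of j] by simp
        ultimately show ?thesis by simp
      next
        case False
        then have "S $ c $ j = 0" by (rule Sdiag)
        moreover have "j = idx_inv (idx c) \<Longrightarrow> idx c < CARD('n::{finite,wellorder}) \<Longrightarrow> False"
          using False by (simp add: idx_idx_inv)
        ultimately show ?thesis by auto
      qed
    qed
    also have "\<dots> = (if idx c < CARD('n::{finite,wellorder}) then (S $ c $ (idx_inv (idx c) :: ('n::{finite,wellorder})))\<^sup>2 else 0)"
      by (simp add: sum.delta)
    finally show ?thesis .
  qed
  have s_mono: "idx c \<le> idx c' \<Longrightarrow> s c' \<le> s c" for c c'
  proof -
    assume le: "idx c \<le> idx c'"
    show "s c' \<le> s c"
    proof (cases "idx c' < CARD('n::{finite,wellorder})")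
      case True
      then have lc: "idx c < CARD('n::{finite,wellorder})" using le by simp
      have "S $ c' $ (idx_inv (idx c') :: ('n::{finite,wellorder})) \<le> S $ c $ (idx_inv (idx c) :: ('n::{finite,wellorder}))"
        using Ssort[of c "idx_inv (idx c) :: ('n::{finite,wellorder})" c' "idx_inv (idx c') :: ('n::{finite,wellorder})"] le True lc
        by (simp add: idx_idx_inv)
      then have "(S $ c' $ (idx_inv (idx c') :: ('n::{finite,wellorder})))\<^sup>2 \<le> (S $ c $ (idx_inv (idx c) :: ('n::{finite,wellorder})))\<^sup>2"
        using Snn by (intro power_mono) auto
      then show ?thesis using True lc by (simp add: s_eq)
    next
      case False
      then show ?thesis using s_nn[of c] by (simp add: s_eq[of c'])
    qed
  qed
  define t where "t k = (if k < CARD(('n::{finite,wellorder})) then s (idx_inv k :: ('m::{finite,wellorder})) else 0)" for k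
  have st: "s c = t (idx c)" for c
    using s_eq[of c] by (simp add: t_def)
  have nA: "(norm A)\<^sup>2 = (\<Sum>k<CARD('m::{finite,wellorder}). t k)"
  proof -
    have "(norm A)\<^sup>2 = (norm S)\<^sup>2" using norm_orth_mult[OF U V, of S] by (simp add: Aeq)
    also have "\<dots> = (\<Sum>c\<in>UNIV. s c)" by (simp add: norm_sq_mat s_def)
    also have "\<dots> = (\<Sum>c\<in>(UNIV::('m::{finite,wellorder}) set). t (idx c))" by (simp add: st)
    also have "\<dots> = (\<Sum>k<CARD('m::{finite,wellorder}). t k)" by (rule sum_idx_reindex)
    finally show ?thesis .
  qed
  have nR: "(norm (A - (P ** transpose P) ** A))\<^sup>2 = (\<Sum>k<CARD('m::{finite,wellorder}). if CARD('r::{finite,wellorder}) \<le> k then t k else 0)"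
  proof -
    have "(norm (A - (P ** transpose P) ** A))\<^sup>2 = (norm R)\<^sup>2" using norm_orth_mult[OF U V, of R] by (simp add: resid)
    also have "\<dots> = (\<Sum>c\<in>UNIV. if CARD('r::{finite,wellorder}) \<le> idx c then s c else 0)"
      unfolding norm_sq_mat s_def Rent by (rule sum.cong) auto
    also have "\<dots> = (\<Sum>c\<in>(UNIV::('m::{finite,wellorder}) set). (\<lambda>k. if CARD('r::{finite,wellorder}) \<le> k then t k else 0) (idx c))" by (rule sum.cong) (simp_all add: st)
    also have "\<dots> = (\<Sum>k<CARD('m::{finite,wellorder}). if CARD('r::{finite,wellorder}) \<le> k then t k else 0)" by (rule sum_idx_reindex)
    finally show ?thesis .
  qed
  have t_nn: "0 \<le> t k" for k by (simp add: t_def s_nn)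
  have t_mono: "t k' \<le> t k" if kk: "k \<le> k'" for k k'
  proof (cases "k' < CARD(('n::{finite,wellorder}))")
    case True
    then have "idx (idx_inv k' :: ('m::{finite,wellorder})) = k'" "idx (idx_inv k :: ('m::{finite,wellorder})) = k" using kk nm by (simp_all add: idx_idx_inv)
    then show ?thesis unfolding t_def using kk True by (simp add: s_mono)
  next
    case False
    then show ?thesis using t_nn[of k] by (simp add: t_def)
  qed
  have t_zero: "t k = 0" if "CARD(('n::{finite,wellorder})) \<le> k" for k using that by (simp add: t_def)
  show "(norm (A - (P ** transpose P) ** A))\<^sup>2 \<le> (1 - real CARD(('r::{finite,wellorder})) / real CARD(('n::{finite,wellorder}))) * (norm A)\<^sup>2"
    unfolding nA nR using rn nm by (intro top_avg t_nn t_mono t_zero) auto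
qed


(* ---- Alg ---- *)


lemma cont_mm: "continuous_on UNIV (\<lambda>x::((real^'k^'m) \<times> (real^'n^'k)). fst x ** snd x)"
  unfolding matrix_matrix_mult_def by (intro continuous_on_vec_lambda continuous_intros)

lemma cont_tr: "continuous_on UNIV (\<lambda>x::real^'n^'m. transpose x)"
  unfolding transpose_def by (intro continuous_on_vec_lambda continuous_intros)

lemma meas_mm[measurable (raw)]:
  fixes A :: "'a \<Rightarrow> real^'k^'m" and B :: "'a \<Rightarrow> real^'n^'k"
  assumes "A \<in> borel_measurable M" "B \<in> borel_measurable M"
  shows "(\<lambda>w. A w ** B w) \<in> borel_measurable M"
  using borel_measurable_continuous_Pair[OF assms cont_mm] by simp

lemma meas_tr[measurable (raw)]:
  fixes A :: "'a \<Rightarrow> real^'n^'m"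
  assumes "A \<in> borel_measurable M"
  shows "(\<lambda>w. transpose (A w)) \<in> borel_measurable M"
  using borel_measurable_continuous_on[OF cont_tr assms] by simp

locale alg =
  fixes qr :: "real^('r::{finite,wellorder})^('m::{finite,wellorder}) \<Rightarrow> real^('r::{finite,wellorder})^('m::{finite,wellorder})"
    and svd :: "real^('n::{finite,wellorder})^('m::{finite,wellorder}) \<Rightarrow> real^('r::{finite,wellorder})^('m::{finite,wellorder})"
    and \<tau> :: nat and \<eta> \<mu> :: real and N :: nat
    and gF :: "real^('n::{finite,wellorder})^('m::{finite,wellorder}) \<Rightarrow> 'b \<Rightarrow> real^('n::{finite,wellorder})^('m::{finite,wellorder})" and X0 :: "real^('n::{finite,wellorder})^('m::{finite,wellorder})" and Q0 :: "real^('r::{finite,wellorder})^('n::{finite,wellorder})"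
begin

definition st where "st xs t = psgd_state qr svd \<tau> \<eta> \<mu> N gF X0 Q0 xs t"
definition sX where "sX xs t = fst (st xs t)"
definition sQ where "sQ xs t = fst (snd (st xs t))"
definition sM where "sM xs t = fst (snd (snd (st xs t)))"
definition sE where "sE xs t = snd (snd (snd (st xs t)))"
definition Di where "Di xs t i = gF (sX xs t) (xs t i) + sE xs t i"
definition Pm where "Pm xs t = (if t mod \<tau> \<noteq> 0 then qr ((1 / real N) *\<^sub>R (\<Sum>i<N. Di xs t i ** sQ xs t))
   else svd ((1 / real N) *\<^sub>R (\<Sum>i<N. Di xs t i)))"

lemma st_eq: "st xs t = (sX xs t, sQ xs t, sM xs t, sE xs t)"
  by (simp add: sX_def sQ_def sM_def sE_def)

lemma init: "sX xs 0 = X0" "sQ xs 0 = Q0" "sM xs 0 = 0" "sE xs 0 = (\<lambda>i. 0)"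
  by (simp_all add: sX_def sQ_def sM_def sE_def st_def)

lemma psgd_X_eq: "psgd_X qr svd \<tau> \<eta> \<mu> N gF X0 Q0 xs t = sX xs t"
  by (simp add: psgd_X_def sX_def st_def)

lemma step:
  "sQ xs (Suc t) = (1 / real N) *\<^sub>R (\<Sum>i<N. transpose (Di xs t i) ** Pm xs t)"
  "sM xs (Suc t) = \<mu> *\<^sub>R sM xs t + Pm xs t ** transpose (sQ xs (Suc t))"
  "sX xs (Suc t) = sX xs t - \<eta> *\<^sub>R sM xs (Suc t)"
  "sE xs (Suc t) i = Di xs t i - (Pm xs t ** transpose (Pm xs t)) ** Di xs t i"
proof -
  have "st xs (Suc t) = psgd_step qr svd \<tau> \<eta> \<mu> N t (\<lambda>i. gF (sX xs t) (xs t i)) (st xs t)"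
    by (simp add: st_def sX_def)
  also have "\<dots> = (let Qn = (1 / real N) *\<^sub>R (\<Sum>i<N. transpose (Di xs t i) ** Pm xs t);
                       mo' = \<mu> *\<^sub>R sM xs t + Pm xs t ** transpose Qn
                   in (sX xs t - \<eta> *\<^sub>R mo', Qn, mo', \<lambda>i. Di xs t i - (Pm xs t ** transpose (Pm xs t)) ** Di xs t i))"
    unfolding st_eq psgd_step_def by (simp add: Let_def Di_def Pm_def)
  finally have *: "st xs (Suc t) = \<dots>" .
  show "sQ xs (Suc t) = (1 / real N) *\<^sub>R (\<Sum>i<N. transpose (Di xs t i) ** Pm xs t)"
    by (simp add: sQ_def * Let_def)
  show "sM xs (Suc t) = \<mu> *\<^sub>R sM xs t + Pm xs t ** transpose (sQ xs (Suc t))"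
    by (simp add: sM_def sQ_def * Let_def)
  show "sX xs (Suc t) = sX xs t - \<eta> *\<^sub>R sM xs (Suc t)"
    by (simp add: sM_def sX_def * Let_def)
  show "sE xs (Suc t) i = Di xs t i - (Pm xs t ** transpose (Pm xs t)) ** Di xs t i"
    by (simp add: sE_def * Let_def)
qed

lemma cong_hist:
  assumes "\<And>s i. s < t \<Longrightarrow> i < N \<Longrightarrow> xs s i = xs' s i"
  shows "sX xs t = sX xs' t \<and> sQ xs t = sQ xs' t \<and> sM xs t = sM xs' t \<and> (\<forall>i<N. sE xs t i = sE xs' t i)"
  using assms
proof (induction t)
  case 0 then show ?case by (simp add: init)
next
  case (Suc t)
  then have IH: "sX xs t = sX xs' t" "sQ xs t = sQ xs' t" "sM xs t = sM xs' t" "\<And>i. i < N \<Longrightarrow> sE xs t i = sE xs' t i"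
    by auto
  have D: "\<And>i. i < N \<Longrightarrow> Di xs t i = Di xs' t i"
    using IH Suc.prems by (simp add: Di_def)
  have S1: "(\<Sum>i<N. Di xs t i) = (\<Sum>i<N. Di xs' t i)" by (rule sum.cong) (simp_all add: D)
  have S2: "(\<Sum>i<N. Di xs t i ** sQ xs t) = (\<Sum>i<N. Di xs' t i ** sQ xs' t)" by (rule sum.cong) (simp_all add: D IH)
  have P: "Pm xs t = Pm xs' t"
    unfolding Pm_def S1 S2 ..
  have Q: "sQ xs (Suc t) = sQ xs' (Suc t)"
    unfolding step P by (intro arg_cong[where f="\<lambda>x. _ *\<^sub>R x"] sum.cong) (simp_all add: D)
  show ?case
    using IH D P Q by (simp add: step)
qed

lemma meas_state:
  fixes xs :: "'w \<Rightarrow> nat \<Rightarrow> nat \<Rightarrow> 'b" and \<Omega> :: "'w measure"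
  assumes gFm: "\<And>i. i < N \<Longrightarrow> (\<lambda>(X, z). gF X z) \<in> borel_measurable (borel \<Otimes>\<^sub>M D i)"
    and qrm: "qr \<in> borel_measurable borel" and svdm: "svd \<in> borel_measurable borel"
    and xsm: "\<And>s i. s < t \<Longrightarrow> i < N \<Longrightarrow> (\<lambda>w. xs w s i) \<in> measurable \<Omega> (D i)"
  shows "(\<lambda>w. sX (xs w) t) \<in> borel_measurable \<Omega> \<and> (\<lambda>w. sQ (xs w) t) \<in> borel_measurable \<Omega> \<and>
         (\<lambda>w. sM (xs w) t) \<in> borel_measurable \<Omega> \<and> (\<forall>i<N. (\<lambda>w. sE (xs w) t i) \<in> borel_measurable \<Omega>)"
  using xsm
proof (induction t)
  case 0 then show ?case by (simp add: init)
next
  case (Suc t)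
  then have IH: "(\<lambda>w. sX (xs w) t) \<in> borel_measurable \<Omega>" "(\<lambda>w. sQ (xs w) t) \<in> borel_measurable \<Omega>"
     "(\<lambda>w. sM (xs w) t) \<in> borel_measurable \<Omega>" "\<And>i. i < N \<Longrightarrow> (\<lambda>w. sE (xs w) t i) \<in> borel_measurable \<Omega>"
    by auto
  have g: "(\<lambda>w. gF (sX (xs w) t) (xs w t i)) \<in> borel_measurable \<Omega>" if i: "i < N" for i
  proof -
    have "(\<lambda>w. (sX (xs w) t, xs w t i)) \<in> measurable \<Omega> (borel \<Otimes>\<^sub>M D i)"
      using IH(1) Suc.prems[of t i] i by (intro measurable_Pair) auto
    from measurable_comp[OF this gFm[OF i]] show ?thesis by (simp add: comp_def)
  qed
  have D: "(\<lambda>w. Di (xs w) t i) \<in> borel_measurable \<Omega>" if i: "i < N" for i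
    unfolding Di_def using g[OF i] IH(4)[OF i] by (intro borel_measurable_add) auto
  have DS: "(\<lambda>w. (1 / real N) *\<^sub>R (\<Sum>i<N. Di (xs w) t i)) \<in> borel_measurable \<Omega>"
    using D by (intro borel_measurable_scaleR borel_measurable_const borel_measurable_sum) auto
  have DQ: "(\<lambda>w. (1 / real N) *\<^sub>R (\<Sum>i<N. Di (xs w) t i ** sQ (xs w) t)) \<in> borel_measurable \<Omega>"
    using D IH(2) by (intro borel_measurable_scaleR borel_measurable_const borel_measurable_sum meas_mm) auto
  have P: "(\<lambda>w. Pm (xs w) t) \<in> borel_measurable \<Omega>"
  proof (cases "t mod \<tau> \<noteq> 0")
    case True
    then show ?thesis unfolding Pm_def using measurable_comp[OF DQ qrm] by (simp add: comp_def)
  next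
    case False
    then show ?thesis unfolding Pm_def using measurable_comp[OF DS svdm] by (simp add: comp_def)
  qed
  have Q: "(\<lambda>w. sQ (xs w) (Suc t)) \<in> borel_measurable \<Omega>"
    unfolding step using D P by (intro borel_measurable_scaleR borel_measurable_const borel_measurable_sum meas_mm meas_tr) auto
  have M: "(\<lambda>w. sM (xs w) (Suc t)) \<in> borel_measurable \<Omega>"
    unfolding step(2)[of _ t] using Q P IH(3) by (intro borel_measurable_scaleR borel_measurable_const borel_measurable_add meas_mm meas_tr) auto
  have X: "(\<lambda>w. sX (xs w) (Suc t)) \<in> borel_measurable \<Omega>"
    unfolding step(3)[of _ t] using M IH(1) by (intro borel_measurable_scaleR borel_measurable_const borel_measurable_diff) auto
  have E: "(\<lambda>w. sE (xs w) (Suc t) i) \<in> borel_measurable \<Omega>" if i: "i < N" for i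
    unfolding step(4) using D[OF i] P by (intro borel_measurable_diff meas_mm meas_tr) auto
  show ?case using Q M X E by blast
qed

end


(* ---- Path ---- *)


context alg
begin

definition gb where "gb xs t = (1 / real N) *\<^sub>R (\<Sum>i<N. gF (sX xs t) (xs t i))"
definition eb where "eb xs t = (1 / real N) *\<^sub>R (\<Sum>i<N. sE xs t i)"
definition Pr where "Pr xs t = Pm xs t ** transpose (Pm xs t)"

lemma Di_avg: "(1 / real N) *\<^sub>R (\<Sum>i<N. Di xs t i) = gb xs t + eb xs t"
  by (simp add: Di_def gb_def eb_def sum.distrib scaleR_add_right)

lemma avg_step:
  "sM xs (Suc t) = \<mu> *\<^sub>R sM xs t + Pr xs t ** (gb xs t + eb xs t)"
  "eb xs (Suc t) = (gb xs t + eb xs t) - Pr xs t ** (gb xs t + eb xs t)"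
proof -
  have "Pm xs t ** transpose (sQ xs (Suc t)) = (1 / real N) *\<^sub>R (\<Sum>i<N. Pr xs t ** Di xs t i)"
    unfolding step(1) transpose_scaleR transpose_sum matrix_transpose_mul transpose_transpose
      mm_scaleR_right mm_sum_right Pr_def matrix_mul_assoc ..
  also have "\<dots> = Pr xs t ** (gb xs t + eb xs t)"
    unfolding Di_avg[symmetric] mm_scaleR_right mm_sum_right ..
  finally show "sM xs (Suc t) = \<mu> *\<^sub>R sM xs t + Pr xs t ** (gb xs t + eb xs t)"
    by (simp add: step(2))
  have "eb xs (Suc t) = (1 / real N) *\<^sub>R (\<Sum>i<N. Di xs t i) - Pr xs t ** ((1 / real N) *\<^sub>R (\<Sum>i<N. Di xs t i))"
    unfolding eb_def step(4) Pr_def sum_subtractf scaleR_diff_right mm_scaleR_right mm_sum_right ..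
  then show "eb xs (Suc t) = (gb xs t + eb xs t) - Pr xs t ** (gb xs t + eb xs t)"
    by (simp add: Di_avg)
qed

definition Zv where "Zv \<gamma> xs t = sX xs t - (\<gamma> * \<mu>) *\<^sub>R sM xs t - \<gamma> *\<^sub>R eb xs t"

lemma Zv_step:
  assumes "\<eta> = \<gamma> * (1 - \<mu>)"
  shows "Zv \<gamma> xs (Suc t) = Zv \<gamma> xs t - \<gamma> *\<^sub>R gb xs t"
proof -
  have c: "\<eta> + \<gamma> * \<mu> = \<gamma>" using assms by (simp add: algebra_simps)
  have "Zv \<gamma> xs (Suc t) = sX xs t - (\<eta> + \<gamma> * \<mu>) *\<^sub>R sM xs (Suc t) - \<gamma> *\<^sub>R eb xs (Suc t)"
    by (simp add: Zv_def step(3) scaleR_add_left algebra_simps)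
  also have "\<dots> = sX xs t - \<gamma> *\<^sub>R (sM xs (Suc t) + eb xs (Suc t))"
    by (simp add: c scaleR_add_right algebra_simps)
  also have "sM xs (Suc t) + eb xs (Suc t) = \<mu> *\<^sub>R sM xs t + gb xs t + eb xs t"
    by (simp add: avg_step)
  finally show ?thesis
    by (simp add: Zv_def scaleR_add_right algebra_simps)
qed

lemma X_minus_Z: "sX xs t - Zv \<gamma> xs t = \<gamma> *\<^sub>R (\<mu> *\<^sub>R sM xs t + eb xs t)"
  by (simp add: Zv_def scaleR_add_right)

definition rho where "rho q t = (if t mod \<tau> = 0 then q else (1::real))"

lemma proj_facts:
  assumes qrP: "\<And>A. is_econ_QR A (qr A)" and svdP: "\<And>A. is_top_left_sv A (svd A)"
    and rn: "CARD('r::{finite,wellorder}) \<le> CARD('n::{finite,wellorder})" and nm: "CARD('n::{finite,wellorder}) \<le> CARD('m::{finite,wellorder})"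
  shows "norm (Pr xs t ** (gb xs t + eb xs t)) \<le> norm (gb xs t + eb xs t)"
    and "norm (eb xs (Suc t)) \<le> rho (sqrt (1 - real CARD('r::{finite,wellorder}) / real CARD('n::{finite,wellorder}))) t * norm (gb xs t + eb xs t)"
proof -
  let ?D = "gb xs t + eb xs t"
  have orth: "transpose (Pm xs t) ** Pm xs t = mat 1"
  proof (cases "t mod \<tau> \<noteq> 0")
    case True
    have "is_econ_QR ((1 / real N) *\<^sub>R (\<Sum>i<N. Di xs t i ** sQ xs t)) (Pm xs t)"
      using True qrP unfolding Pm_def by presburger
    then show ?thesis unfolding is_econ_QR_def by blast
  next
    case False
    then have "Pm xs t = svd ((1 / real N) *\<^sub>R (\<Sum>i<N. Di xs t i))" unfolding Pm_def by presburger
    then show ?thesis using svd_contract(1)[OF svdP rn nm] by metis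
  qed
  have pyth: "(norm (Pr xs t ** ?D))\<^sup>2 + (norm (?D - Pr xs t ** ?D))\<^sup>2 = (norm ?D)\<^sup>2"
    unfolding Pr_def by (rule proj_pyth[OF orth])
  have a1: "(norm (Pr xs t ** ?D))\<^sup>2 \<le> (norm ?D)\<^sup>2" using pyth zero_le_power2[of "norm (?D - Pr xs t ** ?D)"] by linarith
  have a2: "(norm (?D - Pr xs t ** ?D))\<^sup>2 \<le> (norm ?D)\<^sup>2" using pyth zero_le_power2[of "norm (Pr xs t ** ?D)"] by linarith
  show "norm (Pr xs t ** ?D) \<le> norm ?D"
    using a1 by (rule power2_le_imp_le) simp
  have e: "eb xs (Suc t) = ?D - Pr xs t ** ?D" by (rule avg_step(2))
  show "norm (eb xs (Suc t)) \<le> rho (sqrt (1 - real CARD('r::{finite,wellorder}) / real CARD('n::{finite,wellorder}))) t * norm ?D"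
  proof (cases "t mod \<tau> = 0")
    case False
    have "norm (?D - Pr xs t ** ?D) \<le> norm ?D" using a2 by (rule power2_le_imp_le) simp
    then show ?thesis unfolding rho_def e using False by simp
  next
    case True
    have "Pm xs t = svd ?D" using True unfolding Pm_def Di_avg by presburger
    then have "(norm (eb xs (Suc t)))\<^sup>2 \<le> (1 - real CARD('r::{finite,wellorder}) / real CARD('n::{finite,wellorder})) * (norm ?D)\<^sup>2"
      unfolding e Pr_def using svd_contract(2)[OF svdP rn nm, of ?D] by metis
    then have "sqrt ((norm (eb xs (Suc t)))\<^sup>2) \<le> sqrt ((1 - real CARD('r::{finite,wellorder}) / real CARD('n::{finite,wellorder})) * (norm ?D)\<^sup>2)"
      by (rule real_sqrt_le_mono)
    then show ?thesis using True unfolding rho_def by (simp add: real_sqrt_mult)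
  qed
qed

primrec cw :: "real \<Rightarrow> nat \<Rightarrow> nat \<Rightarrow> real" where
  "cw q 0 s = 0"
| "cw q (Suc t) s = rho q t * (cw q t s + (if s = t then 1 else 0))"

primrec dw :: "real \<Rightarrow> nat \<Rightarrow> nat \<Rightarrow> real" where
  "dw q 0 s = 0"
| "dw q (Suc t) s = \<mu> * dw q t s + (if s = t then 1 else 0) + cw q t s"

lemma cw_zero: "t \<le> s \<Longrightarrow> cw q t s = 0"
  by (induction t) auto

lemma dw_zero: "t \<le> s \<Longrightarrow> dw q t s = 0"
  by (induction t) (auto simp: cw_zero)

lemma rho_nn: "0 \<le> q \<Longrightarrow> 0 \<le> rho q t"
  by (simp add: rho_def)

lemma cw_nn: "0 \<le> q \<Longrightarrow> 0 \<le> cw q t s"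
  by (induction t) (auto simp: rho_nn)

lemma dw_nn: "0 \<le> q \<Longrightarrow> 0 \<le> \<mu> \<Longrightarrow> 0 \<le> dw q t s"
  by (induction t) (auto simp: cw_nn)

lemma cw_sum_step: "(\<Sum>s<Suc t. cw q (Suc t) s * a s) = rho q t * ((\<Sum>s<t. cw q t s * a s) + a t)"
proof -
  have "(\<Sum>s<Suc t. cw q (Suc t) s * a s) = (\<Sum>s<Suc t. rho q t * (cw q t s * a s) + (if s = t then rho q t * a t else 0))"
    by (intro sum.cong) (auto simp: algebra_simps)
  also have "\<dots> = rho q t * (\<Sum>s<Suc t. cw q t s * a s) + rho q t * a t"
    by (simp only: sum.distrib sum_distrib_left sum.delta) simp
  also have "(\<Sum>s<Suc t. cw q t s * a s) = (\<Sum>s<t. cw q t s * a s)"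
    by (simp add: cw_zero)
  finally show ?thesis by (simp add: algebra_simps)
qed

lemma dw_sum_step: "(\<Sum>s<Suc t. dw q (Suc t) s * a s) = \<mu> * (\<Sum>s<t. dw q t s * a s) + a t + (\<Sum>s<t. cw q t s * a s)"
proof -
  have "(\<Sum>s<Suc t. dw q (Suc t) s * a s) = (\<Sum>s<Suc t. \<mu> * (dw q t s * a s) + (if s = t then a t else 0) + cw q t s * a s)"
    by (intro sum.cong) (auto simp: algebra_simps)
  also have "\<dots> = \<mu> * (\<Sum>s<Suc t. dw q t s * a s) + a t + (\<Sum>s<Suc t. cw q t s * a s)"
    by (simp only: sum.distrib sum_distrib_left sum.delta) simp
  also have "(\<Sum>s<Suc t. cw q t s * a s) = (\<Sum>s<t. cw q t s * a s)"
    by (simp add: cw_zero)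
  also have "(\<Sum>s<Suc t. dw q t s * a s) = (\<Sum>s<t. dw q t s * a s)"
    by (simp add: dw_zero)
  finally show ?thesis .
qed

lemma path_bounds:
  assumes qrP: "\<And>A. is_econ_QR A (qr A)" and svdP: "\<And>A. is_top_left_sv A (svd A)"
    and rn: "CARD('r::{finite,wellorder}) \<le> CARD('n::{finite,wellorder})" and nm: "CARD('n::{finite,wellorder}) \<le> CARD('m::{finite,wellorder})"
    and q: "q = sqrt (1 - real CARD('r::{finite,wellorder}) / real CARD('n::{finite,wellorder}))"
    and mu: "0 \<le> \<mu>"
  shows "norm (eb xs t) \<le> (\<Sum>s<t. cw q t s * norm (gb xs s)) \<and> norm (sM xs t) \<le> (\<Sum>s<t. dw q t s * norm (gb xs s))"
proof (induction t)
  case 0 then show ?case by (simp add: eb_def init)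
next
  case (Suc t)
  have "real CARD('r::{finite,wellorder}) / real CARD('n::{finite,wellorder}) \<le> 1" using rn by (simp add: divide_le_eq_1)
  then have q0: "0 \<le> q" unfolding q by simp
  have "norm (eb xs (Suc t)) \<le> rho q t * norm (gb xs t + eb xs t)"
    using proj_facts(2)[OF qrP svdP rn nm] q by simp
  also have "\<dots> \<le> rho q t * (norm (gb xs t) + (\<Sum>s<t. cw q t s * norm (gb xs s)))"
    using Suc.IH rho_nn[OF q0, of t] norm_triangle_ineq[of "gb xs t" "eb xs t"]
    by (intro mult_left_mono) auto
  also have "\<dots> = (\<Sum>s<Suc t. cw q (Suc t) s * norm (gb xs s))"
    unfolding cw_sum_step by (simp add: algebra_simps)
  finally have E: "norm (eb xs (Suc t)) \<le> (\<Sum>s<Suc t. cw q (Suc t) s * norm (gb xs s))" .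
  have "norm (sM xs (Suc t)) \<le> \<mu> * norm (sM xs t) + norm (gb xs t + eb xs t)"
    unfolding avg_step(1)
    using norm_triangle_ineq[of "\<mu> *\<^sub>R sM xs t" "Pr xs t ** (gb xs t + eb xs t)"]
      proj_facts(1)[OF qrP svdP rn nm, of xs t] mu by simp
  also have "\<dots> \<le> \<mu> * (\<Sum>s<t. dw q t s * norm (gb xs s)) + (norm (gb xs t) + (\<Sum>s<t. cw q t s * norm (gb xs s)))"
    using Suc.IH mu norm_triangle_ineq[of "gb xs t" "eb xs t"]
    by (intro add_mono mult_left_mono) auto
  also have "\<dots> = (\<Sum>s<Suc t. dw q (Suc t) s * norm (gb xs s))"
    unfolding dw_sum_step by (simp add: algebra_simps)
  finally show ?case using E by simp
qed

lemma sum_cw_bound: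
  assumes q: "0 \<le> q" "q < 1" and tau: "1 \<le> \<tau>"
  shows "(\<Sum>s<t. cw q t s) \<le> real \<tau> / (1 - q)"
proof -
  define S where "S = (q + real \<tau> - 1) / (1 - q)"
  have Sfix: "q * (S + 1) + (real \<tau> - 1) = S" using q unfolding S_def by (simp add: field_simps)
  have inv: "(\<Sum>s<t. cw q t s) \<le> S - (if t mod \<tau> = 0 then 0 else real \<tau> - real (t mod \<tau>))" for t
  proof (induction t)
    case 0
    have "0 \<le> S" unfolding S_def using q tau by simp
    then show ?case by simp
  next
    case (Suc t)
    have step: "(\<Sum>s<Suc t. cw q (Suc t) s) = rho q t * ((\<Sum>s<t. cw q t s) + 1)"
      using cw_sum_step[of q t "\<lambda>_. 1"] by simp
    show ?case
    proof (cases "t mod \<tau> = 0")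
      case True
      then have "(\<Sum>s<Suc t. cw q (Suc t) s) \<le> q * (S + 1)"
        using Suc.IH q step unfolding rho_def by (simp add: mult_left_mono)
      also have "\<dots> = S - (real \<tau> - 1)" using Sfix by simp
      finally have A: "(\<Sum>s<Suc t. cw q (Suc t) s) \<le> S - (real \<tau> - 1)" .
      show ?thesis
      proof (cases "\<tau> = 1")
        case True then show ?thesis using A by simp
      next
        case False
        then have "Suc t mod \<tau> = 1" using True tau by (simp add: mod_Suc)
        then show ?thesis using A by simp
      qed
    next
      case False
      then have A: "(\<Sum>s<Suc t. cw q (Suc t) s) \<le> S - (real \<tau> - real (t mod \<tau>)) + 1"
        using Suc.IH step unfolding rho_def by simp
      show ?thesis
      proof (cases "Suc (t mod \<tau>) = \<tau>")
        case True
        then have "Suc t mod \<tau> = 0" by (metis mod_Suc)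
        then show ?thesis using A True by simp
      next
        case F2: False
        then have "Suc t mod \<tau> = Suc (t mod \<tau>)" by (simp add: mod_Suc)
        then show ?thesis using A F2 False by simp
      qed
    qed
  qed
  have "t mod \<tau> < \<tau>" using tau by simp
  then have "(\<Sum>s<t. cw q t s) \<le> S" using inv[of t] by (auto split: if_splits)
  also have "S \<le> real \<tau> / (1 - q)" unfolding S_def using q by (simp add: divide_right_mono)
  finally show ?thesis .
qed

lemma sum_dw_bound:
  assumes q: "0 \<le> q" and cb: "\<And>t. (\<Sum>s<t. cw q t s) \<le> K" and mu: "0 \<le> \<mu>" "\<mu> < 1"
  shows "(\<Sum>s<t. dw q t s) \<le> (1 + K) / (1 - \<mu>)"
proof (induction t)
  case 0
  have "0 \<le> K" using cb[of 0] by simp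
  then show ?case using mu by simp
next
  case (Suc t)
  have "(\<Sum>s<Suc t. dw q (Suc t) s) = \<mu> * (\<Sum>s<t. dw q t s) + 1 + (\<Sum>s<t. cw q t s)"
    using dw_sum_step[of q t "\<lambda>_. 1"] by simp
  also have "\<dots> \<le> \<mu> * ((1 + K) / (1 - \<mu>)) + 1 + K"
    using Suc.IH cb[of t] mu by (intro add_mono mult_left_mono) auto
  also have "\<dots> = (1 + K) / (1 - \<mu>)" using mu by (simp add: field_simps)
  finally show ?case .
qed

end


(* ---- Smooth ---- *)


lemma descent:
  fixes f :: "'a::real_inner \<Rightarrow> real" and g :: "'a \<Rightarrow> 'a"
  assumes fd: "\<And>X. (f has_derivative (\<lambda>H. g X \<bullet> H)) (at X)"
    and lip: "\<And>X Y. norm (g X - g Y) \<le> L * norm (X - Y)"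
  shows "f Y \<le> f X + g X \<bullet> (Y - X) + L / 2 * (norm (Y - X))\<^sup>2"
proof -
  define d where "d = Y - X"
  define \<psi> where "\<psi> s = f (X + s *\<^sub>R d) - s * (g X \<bullet> d) - L / 2 * s\<^sup>2 * (norm d)\<^sup>2" for s
  have der: "(\<psi> has_real_derivative (g (X + s *\<^sub>R d) \<bullet> d - g X \<bullet> d - L * s * (norm d)\<^sup>2)) (at s)" for s
  proof -
    have lin: "((\<lambda>s. X + s *\<^sub>R d) has_derivative (\<lambda>h. h *\<^sub>R d)) (at s)"
      by (auto intro!: derivative_eq_intros)
    have "((\<lambda>s. f (X + s *\<^sub>R d)) has_derivative (\<lambda>h. g (X + s *\<^sub>R d) \<bullet> (h *\<^sub>R d))) (at s)"
      using has_derivative_compose[OF lin fd] by (simp add: comp_def)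
    moreover have "(\<lambda>h. g (X + s *\<^sub>R d) \<bullet> (h *\<^sub>R d)) = (*) (g (X + s *\<^sub>R d) \<bullet> d)"
      by (auto simp: fun_eq_iff)
    ultimately have "((\<lambda>s. f (X + s *\<^sub>R d)) has_real_derivative (g (X + s *\<^sub>R d) \<bullet> d)) (at s)"
      by (simp add: has_field_derivative_def)
    then show ?thesis unfolding \<psi>_def
      by (auto intro!: derivative_eq_intros simp: power2_eq_square algebra_simps)
  qed
  have nonpos: "g (X + s *\<^sub>R d) \<bullet> d - g X \<bullet> d - L * s * (norm d)\<^sup>2 \<le> 0" if "0 \<le> s" for s
  proof -
    have "g (X + s *\<^sub>R d) \<bullet> d - g X \<bullet> d = (g (X + s *\<^sub>R d) - g X) \<bullet> d" by (simp add: inner_diff_left)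
    also have "\<dots> \<le> norm (g (X + s *\<^sub>R d) - g X) * norm d" by (rule norm_cauchy_schwarz)
    also have "\<dots> \<le> (L * norm (s *\<^sub>R d)) * norm d"
      using lip[of "X + s *\<^sub>R d" X] by (intro mult_right_mono) auto
    also have "\<dots> = L * s * (norm d)\<^sup>2" using that by (simp add: power2_eq_square)
    finally show ?thesis by simp
  qed
  have "\<psi> 1 \<le> \<psi> 0"
  proof (rule DERIV_nonpos_imp_nonincreasing[of 0 1])
    fix x :: real assume "0 \<le> x"
    then show "\<exists>y. (\<psi> has_real_derivative y) (at x) \<and> y \<le> 0" using der nonpos by blast
  qed simp
  then show ?thesis unfolding \<psi>_def d_def by (simp add: algebra_simps)
qed

lemma grad_avg:
  fixes f :: "'a::real_inner \<Rightarrow> real"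
  assumes fd: "(f has_derivative (\<lambda>H. g \<bullet> H)) (at X)"
    and favg: "\<And>X. f X = (\<Sum>i<N. fi i X) / real N"
    and fid: "\<And>i. i < N \<Longrightarrow> (fi i has_derivative (\<lambda>H. gi i \<bullet> H)) (at X)"
    and N: "1 \<le> N"
  shows "g = (1 / real N) *\<^sub>R (\<Sum>i<N. gi i)"
proof -
  have feq: "f = (\<lambda>X. (\<Sum>i<N. fi i X) / real N)" using favg by auto
  have "((\<lambda>X. (\<Sum>i<N. fi i X) / real N) has_derivative (\<lambda>H. (\<Sum>i<N. gi i \<bullet> H) / real N)) (at X)"
    using fid N by (auto intro!: derivative_eq_intros)
  then have d2: "(f has_derivative (\<lambda>H. ((1 / real N) *\<^sub>R (\<Sum>i<N. gi i)) \<bullet> H)) (at X)"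
    unfolding feq using N by (simp add: inner_sum_left)
  have "(\<lambda>H. g \<bullet> H) = (\<lambda>H. ((1 / real N) *\<^sub>R (\<Sum>i<N. gi i)) \<bullet> H)"
    by (rule has_derivative_unique[OF fd d2])
  then have "(g - (1 / real N) *\<^sub>R (\<Sum>i<N. gi i)) \<bullet> (g - (1 / real N) *\<^sub>R (\<Sum>i<N. gi i)) = 0"
    by (metis inner_diff_left diff_self)
  then show ?thesis by simp
qed

lemma grad_zero_if_L0:
  fixes f :: "'a::real_inner \<Rightarrow> real"
  assumes fd: "\<And>X. (f has_derivative (\<lambda>H. g X \<bullet> H)) (at X)"
    and lip: "\<And>X Y. norm (g X - g Y) \<le> 0 * norm (X - Y)"
    and bdd: "bdd_below (range f)"
  shows "g X = 0"
proof (rule ccontr)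
  assume ne: "g X \<noteq> 0"
  obtain B where B: "\<And>Y. B \<le> f Y" using bdd by (auto simp: bdd_below_def)
  define s where "s = (f X - B + 1) / (norm (g X))\<^sup>2"
  have gpos: "0 < (norm (g X))\<^sup>2" using ne by simp
  have "f (X - s *\<^sub>R g X) \<le> f X + g X \<bullet> ((X - s *\<^sub>R g X) - X) + 0 / 2 * (norm ((X - s *\<^sub>R g X) - X))\<^sup>2"
    by (rule descent[OF fd lip])
  also have "\<dots> = f X - s * (norm (g X))\<^sup>2" by (simp add: power2_norm_eq_inner)
  also have "\<dots> = B - 1" unfolding s_def using gpos by simp
  finally show False using B[of "X - s *\<^sub>R g X"] by simp
qed


(* ---- Prob ---- *)


lemma (in prob_space) split_distr:
  assumes ind: "indep_vars M' X I" and AB: "A \<inter> B = {}" "A \<subseteq> I" "B \<subseteq> I" "A \<noteq> {}" "B \<noteq> {}"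
    and dX: "\<And>p. p \<in> I \<Longrightarrow> distr M (M' p) (X p) = M' p"
  shows "distr M (PiM A M' \<Otimes>\<^sub>M PiM B M') (\<lambda>w. (restrict (\<lambda>p. X p w) A, restrict (\<lambda>p. X p w) B)) = PiM A M' \<Otimes>\<^sub>M PiM B M'"
proof -
  have i1: "indep_var (PiM A M') (\<lambda>w. restrict (\<lambda>p. X p w) A) (PiM B M') (\<lambda>w. restrict (\<lambda>p. X p w) B)"
    by (rule indep_var_restrict[OF ind AB(1-3)])
  have rvX: "\<And>p. p \<in> I \<Longrightarrow> random_variable (M' p) (X p)"
    using ind unfolding indep_vars_def by blast
  have dA: "distr M (PiM C M') (\<lambda>w. restrict (\<lambda>p. X p w) C) = PiM C M'" if C: "C \<subseteq> I" "C \<noteq> {}" for C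
  proof -
    have iC: "indep_vars M' X C" by (rule indep_vars_subset[OF ind C(1)])
    have rvC: "\<And>p. p \<in> C \<Longrightarrow> random_variable (M' p) (X p)" using rvX C(1) by auto
    have "distr M (PiM C M') (\<lambda>w. restrict (\<lambda>p. X p w) C) = PiM C (\<lambda>p. distr M (M' p) (X p))"
      using iffD1[OF indep_vars_iff_distr_eq_PiM'[OF C(2) rvC] iC] .
    also have "\<dots> = PiM C M'" using dX C(1) by (intro PiM_cong) auto
    finally show ?thesis .
  qed
  have "distr M (PiM A M') (\<lambda>w. restrict (\<lambda>p. X p w) A) \<Otimes>\<^sub>M distr M (PiM B M') (\<lambda>w. restrict (\<lambda>p. X p w) B)
     = distr M (PiM A M' \<Otimes>\<^sub>M PiM B M') (\<lambda>w. (restrict (\<lambda>p. X p w) A, restrict (\<lambda>p. X p w) B))"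
    using i1 unfolding indep_var_distribution_eq by (elim conjE)
  from this[unfolded dA[OF AB(2,4)] dA[OF AB(3,5)]] show ?thesis by (rule sym)
qed

lemma PiM_coord_indep:
  assumes prob: "\<And>i. i \<in> I \<Longrightarrow> prob_space (D i)" and I: "I \<noteq> {}"
  shows "prob_space.indep_vars (PiM I D) D (\<lambda>k y. y k) I"
proof -
  interpret P: prob_space "PiM I D" using prob by (intro prob_space_PiM) auto
  have rv: "\<And>k. k \<in> I \<Longrightarrow> P.random_variable (D k) (\<lambda>y. y k)"
    by (rule measurable_component_singleton)
  have comp: "\<And>k. k \<in> I \<Longrightarrow> distr (PiM I D) (D k) (\<lambda>y. y k) = D k"
    by (rule distr_PiM_component[OF prob]) auto
  have "distr (PiM I D) (PiM I D) (\<lambda>y. \<lambda>k\<in>I. y k) = distr (PiM I D) (PiM I D) (\<lambda>y. y)"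
    by (intro distr_cong) (auto simp: space_PiM PiE_def extensional_restrict)
  also have "\<dots> = PiM I D" by (rule distr_id2) simp
  also have "\<dots> = PiM I (\<lambda>k. distr (PiM I D) (D k) (\<lambda>y. y k))"
    using comp by (intro PiM_cong) auto
  finally have "distr (PiM I D) (PiM I D) (\<lambda>y. \<lambda>k\<in>I. y k) = PiM I (\<lambda>k. distr (PiM I D) (D k) (\<lambda>y. y k))" .
  then show ?thesis
    using iffD2[OF P.indep_vars_iff_distr_eq_PiM'[where M'=D and X="\<lambda>k y. y k", OF I rv]] by blast
qed

lemma sq_int:
  fixes g :: "'a \<Rightarrow> 'v::{banach,second_countable_topology}"
  assumes g: "g \<in> borel_measurable M" and b: "(\<integral>\<^sup>+x. ennreal ((norm (g x))\<^sup>2) \<partial>M) \<le> ennreal c" and c: "0 \<le> c"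
  shows "integrable M (\<lambda>x. (norm (g x))\<^sup>2)" and "(\<integral>x. (norm (g x))\<^sup>2 \<partial>M) \<le> c"
proof -
  have m: "(\<lambda>x. (norm (g x))\<^sup>2) \<in> borel_measurable M" using g by measurable
  show "integrable M (\<lambda>x. (norm (g x))\<^sup>2)"
  proof (rule integrableI_bounded[OF m])
    have "(\<integral>\<^sup>+x. ennreal (norm ((norm (g x))\<^sup>2)) \<partial>M) = (\<integral>\<^sup>+x. ennreal ((norm (g x))\<^sup>2) \<partial>M)" by simp
    also have "\<dots> < \<infinity>" using b by (simp add: le_less_trans)
    finally show "(\<integral>\<^sup>+x. ennreal (norm ((norm (g x))\<^sup>2)) \<partial>M) < \<infinity>" .
  qed
  have "(\<integral>x. (norm (g x))\<^sup>2 \<partial>M) = enn2real (\<integral>\<^sup>+x. ennreal ((norm (g x))\<^sup>2) \<partial>M)"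
    by (rule integral_eq_nn_integral[OF m]) simp
  also have "\<dots> \<le> c" using b c by (simp add: enn2real_leI)
  finally show "(\<integral>x. (norm (g x))\<^sup>2 \<partial>M) \<le> c" .
qed

lemma inner_le_sq: "\<bar>(x::'v::real_inner) \<bullet> y\<bar> \<le> (norm x)\<^sup>2 + (norm y)\<^sup>2"
proof -
  have "\<bar>x \<bullet> y\<bar> \<le> norm x * norm y" by (rule Cauchy_Schwarz_ineq2)
  also have "\<dots> \<le> (norm x)\<^sup>2 + (norm y)\<^sup>2"
    by (smt (verit, best) norm_ge_zero power2_eq_square mult_mono sum_squares_bound)
  finally show ?thesis .
qed

lemma var_prod:
  fixes a :: "nat \<Rightarrow> 'b \<Rightarrow> 'v::euclidean_space"
  assumes prob: "\<And>i. i < N \<Longrightarrow> prob_space (D i)"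
    and meas: "\<And>i. i < N \<Longrightarrow> a i \<in> borel_measurable (D i)"
    and int: "\<And>i. i < N \<Longrightarrow> integrable (D i) (a i)"
    and mean0: "\<And>i. i < N \<Longrightarrow> integral\<^sup>L (D i) (a i) = 0"
    and var: "\<And>i. i < N \<Longrightarrow> (\<integral>\<^sup>+z. ennreal ((norm (a i z))\<^sup>2) \<partial>D i) \<le> ennreal s2"
    and s2: "0 \<le> s2"
  shows "(\<integral>\<^sup>+y. ennreal ((norm (\<Sum>i<N. a i (y i)))\<^sup>2) \<partial>PiM {..<N} D) \<le> ennreal (real N * s2)"
proof -
  let ?P = "PiM {..<N} D"
  interpret P: prob_space ?P using prob by (intro prob_space_PiM) auto
  have comp: "distr ?P (D i) (\<lambda>y. y i) = D i" if "i < N" for i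
    by (rule distr_PiM_component[OF prob]) (use that in auto)
  have mA: "(\<lambda>y. a i (y i)) \<in> borel_measurable ?P" if "i < N" for i
  proof -
    have "(\<lambda>y. y i) \<in> measurable ?P (D i)" using that by (intro measurable_component_singleton) auto
    from measurable_compose[OF this meas[OF that]] show ?thesis .
  qed
  have nnA: "(\<integral>\<^sup>+y. ennreal ((norm (a i (y i)))\<^sup>2) \<partial>?P) \<le> ennreal s2" if i: "i < N" for i
  proof -
    have "(\<integral>\<^sup>+y. ennreal ((norm (a i (y i)))\<^sup>2) \<partial>?P) = (\<integral>\<^sup>+z. ennreal ((norm (a i z))\<^sup>2) \<partial>distr ?P (D i) (\<lambda>y. y i))"
      using meas[OF i] i by (subst nn_integral_distr) (auto simp: comp)
    also have "\<dots> \<le> ennreal s2" using var[OF i] comp[OF i] by simp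
    finally show ?thesis .
  qed
  have sqA: "integrable ?P (\<lambda>y. (norm (a i (y i)))\<^sup>2)" "(\<integral>y. (norm (a i (y i)))\<^sup>2 \<partial>?P) \<le> s2" if "i < N" for i
    using sq_int[OF mA[OF that] nnA[OF that] s2] by auto
  have mIJ: "(\<lambda>y. a i (y i) \<bullet> a j (y j)) \<in> borel_measurable ?P" if "i < N" "j < N" for i j
    using mA[OF that(1)] mA[OF that(2)] by measurable
  have intIJ: "integrable ?P (\<lambda>y. a i (y i) \<bullet> a j (y j))" if ij: "i < N" "j < N" for i j
  proof (rule Bochner_Integration.integrable_bound[OF _ mIJ[OF ij]])
    show "integrable ?P (\<lambda>y. (norm (a i (y i)))\<^sup>2 + (norm (a j (y j)))\<^sup>2)"
      using sqA(1)[OF ij(1)] sqA(1)[OF ij(2)] by simp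
    show "AE y in ?P. norm (a i (y i) \<bullet> a j (y j)) \<le> norm ((norm (a i (y i)))\<^sup>2 + (norm (a j (y j)))\<^sup>2)"
      using inner_le_sq by auto
  qed
  have cross: "(\<integral>y. a i (y i) \<bullet> a j (y j) \<partial>?P) = 0" if ij: "i < N" "j < N" "i \<noteq> j" for i j
  proof -
    let ?A = "PiM {i} D" and ?B = "PiM {j} D"
    have ind: "P.indep_vars D (\<lambda>k y. y k) {..<N}"
      by (rule PiM_coord_indep) (use prob ij in auto)
    have dd: "distr ?P (?A \<Otimes>\<^sub>M ?B) (\<lambda>w. (restrict (\<lambda>p. w p) {i}, restrict (\<lambda>p. w p) {j})) = ?A \<Otimes>\<^sub>M ?B"
      by (rule P.split_distr[OF ind]) (use ij comp in auto)
    interpret A: prob_space ?A using prob ij by (intro prob_space_PiM) auto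
    interpret B: prob_space ?B using prob ij by (intro prob_space_PiM) auto
    interpret AB: pair_prob_space ?A ?B ..
    define F where "F uv = a i (fst uv i) \<bullet> a j (snd uv j)" for uv
    have mF: "F \<in> borel_measurable (?A \<Otimes>\<^sub>M ?B)"
    proof -
      have "(\<lambda>uv. a i (fst uv i)) \<in> borel_measurable (?A \<Otimes>\<^sub>M ?B)"
        by (rule measurable_compose[OF measurable_compose[OF measurable_fst measurable_component_singleton[of i "{i}" D, OF singletonI]] meas[OF ij(1)]])
      moreover have "(\<lambda>uv. a j (snd uv j)) \<in> borel_measurable (?A \<Otimes>\<^sub>M ?B)"
        by (rule measurable_compose[OF measurable_compose[OF measurable_snd measurable_component_singleton[of j "{j}" D, OF singletonI]] meas[OF ij(2)]])
      ultimately show ?thesis unfolding F_def by measurable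
    qed
    have mR: "(\<lambda>w. (restrict (\<lambda>p. w p) {i}, restrict (\<lambda>p. w p) {j})) \<in> measurable ?P (?A \<Otimes>\<^sub>M ?B)"
      using ij by (intro measurable_Pair measurable_restrict_subset) auto
    have FR: "F (restrict (\<lambda>p. w p) {i}, restrict (\<lambda>p. w p) {j}) = a i (w i) \<bullet> a j (w j)" for w
      by (simp add: F_def)
    have intF: "integrable (?A \<Otimes>\<^sub>M ?B) F"
      using integrable_distr_eq[OF mR mF] intIJ[OF ij(1,2)] dd by (simp add: FR)
    have "(\<integral>y. a i (y i) \<bullet> a j (y j) \<partial>?P) = integral\<^sup>L (?A \<Otimes>\<^sub>M ?B) F"
      using integral_distr[OF mR mF] dd by (simp add: FR)
    also have "\<dots> = (\<integral>u. (\<integral>v. F (u, v) \<partial>?B) \<partial>?A)"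
      by (rule AB.integral_fst'[OF intF, symmetric])
    also have "\<dots> = (\<integral>u. 0 \<partial>?A)"
    proof (rule Bochner_Integration.integral_cong[OF refl])
      fix u
      have compj: "distr ?B (D j) (\<lambda>v. v j) = D j"
        by (rule distr_PiM_component[OF prob]) (use ij in auto)
      have mj: "(\<lambda>v. v j) \<in> measurable ?B (D j)" by (rule measurable_component_singleton) simp
      have intj: "integrable ?B (\<lambda>v. a j (v j))"
        using integrable_distr_eq[OF mj meas[OF ij(2)]] compj int[OF ij(2)] by simp
      have "(\<integral>v. a j (v j) \<partial>?B) = integral\<^sup>L (D j) (a j)"
        using integral_distr[OF mj meas[OF ij(2)]] compj by simp
      then show "(\<integral>v. F (u, v) \<partial>?B) = 0"
        unfolding F_def using intj mean0[OF ij(2)] by simp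
    qed
    finally show ?thesis by simp
  qed
  have sq_expand: "(norm (\<Sum>i<N. a i (y i)))\<^sup>2 = (\<Sum>i<N. \<Sum>j<N. a i (y i) \<bullet> a j (y j))" for y
    unfolding power2_norm_eq_inner inner_sum_left inner_sum_right by (rule sum.swap)
  have intS: "integrable ?P (\<lambda>y. (norm (\<Sum>i<N. a i (y i)))\<^sup>2)"
    unfolding sq_expand using intIJ by (intro Bochner_Integration.integrable_sum) auto
  have i1: "integrable ?P (\<lambda>y. \<Sum>j<N. a i (y i) \<bullet> a j (y j))" if "i < N" for i
    using intIJ that by (intro Bochner_Integration.integrable_sum) auto
  have "(\<integral>y. (norm (\<Sum>i<N. a i (y i)))\<^sup>2 \<partial>?P) = (\<Sum>i<N. (\<integral>y. (\<Sum>j<N. a i (y i) \<bullet> a j (y j)) \<partial>?P))"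
    unfolding sq_expand using i1 by (intro Bochner_Integration.integral_sum) auto
  also have "\<dots> = (\<Sum>i<N. \<Sum>j<N. (\<integral>y. a i (y i) \<bullet> a j (y j) \<partial>?P))"
    using intIJ by (intro sum.cong refl Bochner_Integration.integral_sum) auto
  also have "\<dots> = (\<Sum>i<N. (\<integral>y. (norm (a i (y i)))\<^sup>2 \<partial>?P))"
  proof (rule sum.cong[OF refl])
    fix i assume i: "i \<in> {..<N}"
    have "(\<Sum>j<N. (\<integral>y. a i (y i) \<bullet> a j (y j) \<partial>?P)) = (\<Sum>j<N. if j = i then (\<integral>y. a i (y i) \<bullet> a i (y i) \<partial>?P) else 0)"
      using cross i by (intro sum.cong) auto
    also have "\<dots> = (\<integral>y. (norm (a i (y i)))\<^sup>2 \<partial>?P)" using i by (simp add: power2_norm_eq_inner)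
    finally show "(\<Sum>j<N. (\<integral>y. a i (y i) \<bullet> a j (y j) \<partial>?P)) = (\<integral>y. (norm (a i (y i)))\<^sup>2 \<partial>?P)" .
  qed
  also have "\<dots> \<le> (\<Sum>i<N. s2)" using sqA(2) by (intro sum_mono) auto
  also have "\<dots> = real N * s2" by simp
  finally have le: "(\<integral>y. (norm (\<Sum>i<N. a i (y i)))\<^sup>2 \<partial>?P) \<le> real N * s2" .
  have "(\<integral>\<^sup>+y. ennreal ((norm (\<Sum>i<N. a i (y i)))\<^sup>2) \<partial>?P) = ennreal (\<integral>y. (norm (\<Sum>i<N. a i (y i)))\<^sup>2 \<partial>?P)"
    by (rule nn_integral_eq_integral[OF intS]) simp
  also have "\<dots> \<le> ennreal (real N * s2)" using le by (rule ennreal_leI)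
  finally show ?thesis .
qed


(* ---- Setting ---- *)


locale setting = alg qr svd \<tau> \<eta> \<mu> N gF X0 Q0
  for qr :: "real^('r::{finite,wellorder})^('m::{finite,wellorder}) \<Rightarrow> real^('r::{finite,wellorder})^('m::{finite,wellorder})"
    and svd :: "real^('n::{finite,wellorder})^('m::{finite,wellorder}) \<Rightarrow> real^('r::{finite,wellorder})^('m::{finite,wellorder})"
    and \<tau> :: nat and \<eta> \<mu> :: real and N :: nat
    and gF :: "real^('n::{finite,wellorder})^('m::{finite,wellorder}) \<Rightarrow> 'b \<Rightarrow> real^('n::{finite,wellorder})^('m::{finite,wellorder})"
    and X0 :: "real^('n::{finite,wellorder})^('m::{finite,wellorder})" and Q0 :: "real^('r::{finite,wellorder})^('n::{finite,wellorder})" +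
  fixes M :: "'a measure" and \<xi> :: "nat \<Rightarrow> nat \<Rightarrow> 'a \<Rightarrow> 'b" and D :: "nat \<Rightarrow> 'b measure"
    and grad_fi :: "nat \<Rightarrow> real^('n::{finite,wellorder})^('m::{finite,wellorder}) \<Rightarrow> real^('n::{finite,wellorder})^('m::{finite,wellorder})"
    and grad_f :: "real^('n::{finite,wellorder})^('m::{finite,wellorder}) \<Rightarrow> real^('n::{finite,wellorder})^('m::{finite,wellorder})"
    and \<sigma>2 G2 :: real
  assumes Mp: "prob_space M"
    and N1: "1 \<le> N"
    and \<xi>m: "\<And>t i. i < N \<Longrightarrow> \<xi> t i \<in> measurable M (D i)"
    and \<xi>d: "\<And>t i. i < N \<Longrightarrow> distr M (D i) (\<xi> t i) = D i"
    and ind: "prob_space.indep_vars M (\<lambda>(t, i). D i) (\<lambda>(t, i). \<xi> t i) (UNIV \<times> {..<N})"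
    and Dp: "\<And>i. i < N \<Longrightarrow> prob_space (D i)"
    and gFm: "\<And>i. i < N \<Longrightarrow> (\<lambda>(X, z). gF X z) \<in> borel_measurable (borel \<Otimes>\<^sub>M D i)"
    and qrm: "qr \<in> borel_measurable borel" and svdm: "svd \<in> borel_measurable borel"
    and unb: "\<And>i X. i < N \<Longrightarrow> integrable (D i) (gF X) \<and> (\<integral>z. gF X z \<partial>D i) = grad_fi i X"
    and var: "\<And>i X. i < N \<Longrightarrow> (\<integral>\<^sup>+z. ennreal ((norm (gF X z - grad_fi i X))\<^sup>2) \<partial>D i) \<le> ennreal \<sigma>2"
    and \<sigma>2: "0 \<le> \<sigma>2"
    and sm: "\<And>X. (\<integral>\<^sup>+z. ennreal ((norm ((1 / real N) *\<^sub>R (\<Sum>i<N. gF X (z i))))\<^sup>2) \<partial>PiM {..<N} D) \<le> ennreal G2"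
    and G2: "0 \<le> G2"
    and gavg: "\<And>X. grad_f X = (1 / real N) *\<^sub>R (\<Sum>i<N. grad_fi i X)"
    and gfm: "grad_f \<in> borel_measurable borel"
begin

interpretation P: prob_space M by (rule Mp)

definition xw where "xw w = (\<lambda>s i. \<xi> s i w)"
definition xsH :: "(nat \<times> nat \<Rightarrow> 'b) \<Rightarrow> nat \<Rightarrow> nat \<Rightarrow> 'b" where "xsH x = (\<lambda>s i. x (s, i))"
definition Kh where "Kh t = {..<t} \<times> {..<N} \<union> {(Suc t, 0)}"
definition Kc where "Kc t = {t} \<times> {..<N}"
definition M' :: "nat \<times> nat \<Rightarrow> 'b measure" where "M' = (\<lambda>(s, i). D i)"
definition Xi :: "nat \<times> nat \<Rightarrow> 'a \<Rightarrow> 'b" where "Xi = (\<lambda>(s, i). \<xi> s i)"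
definition Hh where "Hh t w = restrict (\<lambda>p. Xi p w) (Kh t)"
definition Cc where "Cc t w = restrict (\<lambda>p. Xi p w) (Kc t)"
definition Ph where "Ph t = PiM (Kh t) M'"
definition Pc where "Pc t = PiM (Kc t) M'"
definition PN where "PN = PiM {..<N} D"
definition yN where "yN t y = (\<lambda>i\<in>{..<N}. y (t, i))"

lemma split: "distr M (Ph t \<Otimes>\<^sub>M Pc t) (\<lambda>w. (Hh t w, Cc t w)) = Ph t \<Otimes>\<^sub>M Pc t"
  unfolding Ph_def Pc_def Hh_def Cc_def
proof (rule P.split_distr)
  show "P.indep_vars M' Xi (UNIV \<times> {..<N})" using ind unfolding M'_def Xi_def .
  show "Kh t \<inter> Kc t = {}" unfolding Kh_def Kc_def by auto
  show "Kh t \<subseteq> UNIV \<times> {..<N}" unfolding Kh_def using N1 by auto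
  show "Kc t \<subseteq> UNIV \<times> {..<N}" unfolding Kc_def by auto
  show "Kh t \<noteq> {}" unfolding Kh_def by auto
  have "(t, 0) \<in> Kc t" using N1 by (simp add: Kc_def)
  then show "Kc t \<noteq> {}" by blast
  show "distr M (M' p) (Xi p) = M' p" if "p \<in> UNIV \<times> {..<N}" for p
    using that \<xi>d unfolding M'_def Xi_def by (cases p) auto
qed

lemma M'_prob: "p \<in> UNIV \<times> {..<N} \<Longrightarrow> prob_space (M' p)"
  unfolding M'_def using Dp by (cases p) auto

lemma yN_meas: "yN t \<in> measurable (Pc t) PN"
  unfolding yN_def Pc_def PN_def
proof (rule measurable_restrict)
  fix i assume "i \<in> {..<N}"
  then have "(\<lambda>y. y (t, i)) \<in> measurable (PiM (Kc t) M') (M' (t, i))"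
    by (intro measurable_component_singleton) (auto simp: Kc_def)
  then show "(\<lambda>y. y (t, i)) \<in> measurable (PiM (Kc t) M') (D i)" by (simp add: M'_def)
qed

lemma reindex: "distr (Pc t) PN (yN t) = PN"
proof -
  have "distr (PiM (Kc t) M') (PiM {..<N} (\<lambda>i. M' (t, i))) (\<lambda>\<omega>. \<lambda>n\<in>{..<N}. \<omega> (t, n)) = PiM {..<N} (\<lambda>i. M' (t, i))"
    by (rule distr_PiM_reindex) (auto simp: Kc_def inj_on_def intro: M'_prob)
  moreover have "PiM {..<N} (\<lambda>i. M' (t, i)) = PN" unfolding PN_def M'_def by simp
  ultimately show ?thesis unfolding Pc_def yN_def by simp
qed

lemma Hh_meas: "Hh t \<in> measurable M (Ph t)"
  unfolding Hh_def Ph_def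
  using N1 by (intro measurable_restrict) (auto simp: Kh_def M'_def Xi_def intro!: \<xi>m)

lemma Cc_meas: "Cc t \<in> measurable M (Pc t)"
  unfolding Cc_def Pc_def
  by (intro measurable_restrict) (auto simp: Kc_def M'_def Xi_def \<xi>m)

lemma cong_w:
  "sX (xw w) t = sX (xsH (Hh t w)) t \<and> sQ (xw w) t = sQ (xsH (Hh t w)) t \<and> sM (xw w) t = sM (xsH (Hh t w)) t \<and> (\<forall>i<N. sE (xw w) t i = sE (xsH (Hh t w)) t i)"
  by (rule cong_hist) (simp add: xw_def xsH_def Hh_def Kh_def Xi_def)

lemma eb_w: "eb (xw w) t = eb (xsH (Hh t w)) t"
proof -
  have "(\<Sum>i<N. sE (xw w) t i) = (\<Sum>i<N. sE (xsH (Hh t w)) t i)"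
    by (rule sum.cong) (use cong_w[of w t] in auto)
  then show ?thesis unfolding eb_def by simp
qed

lemma yN_w: "i < N \<Longrightarrow> yN t (Cc t w) i = \<xi> t i w"
  by (simp add: yN_def Cc_def Kc_def Xi_def)

lemma state_meas_H:
  "(\<lambda>x. sX (xsH x) t) \<in> borel_measurable (Ph t) \<and> (\<lambda>x. sM (xsH x) t) \<in> borel_measurable (Ph t) \<and>
   (\<lambda>x. eb (xsH x) t) \<in> borel_measurable (Ph t)"
proof -
  have "(\<lambda>x. sX (xsH x) t) \<in> borel_measurable (Ph t) \<and> (\<lambda>x. sQ (xsH x) t) \<in> borel_measurable (Ph t) \<and>
     (\<lambda>x. sM (xsH x) t) \<in> borel_measurable (Ph t) \<and> (\<forall>i<N. (\<lambda>x. sE (xsH x) t i) \<in> borel_measurable (Ph t))"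
  proof (rule meas_state[OF gFm qrm svdm])
    fix s i assume "s < t" "i < N"
    then have "(\<lambda>x. x (s, i)) \<in> measurable (Ph t) (M' (s, i))"
      unfolding Ph_def by (intro measurable_component_singleton) (auto simp: Kh_def)
    then show "(\<lambda>x. xsH x s i) \<in> measurable (Ph t) (D i)" by (simp add: xsH_def M'_def)
  qed auto
  then show ?thesis unfolding eb_def
    by (auto intro!: borel_measurable_scaleR borel_measurable_sum)
qed

lemma state_meas_M:
  "(\<lambda>w. sX (xw w) t) \<in> borel_measurable M \<and> (\<lambda>w. sM (xw w) t) \<in> borel_measurable M \<and>
   (\<lambda>w. eb (xw w) t) \<in> borel_measurable M \<and> (\<lambda>w. gb (xw w) t) \<in> borel_measurable M"
proof -
  have "(\<lambda>w. sX (xw w) t) \<in> borel_measurable M \<and> (\<lambda>w. sQ (xw w) t) \<in> borel_measurable M \<and>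
     (\<lambda>w. sM (xw w) t) \<in> borel_measurable M \<and> (\<forall>i<N. (\<lambda>w. sE (xw w) t i) \<in> borel_measurable M)"
    by (rule meas_state[OF gFm qrm svdm]) (auto simp: xw_def \<xi>m)
  moreover have "(\<lambda>w. gF (sX (xw w) t) (\<xi> t i w)) \<in> borel_measurable M" if "i < N" "(\<lambda>w. sX (xw w) t) \<in> borel_measurable M" for i
  proof -
    have "(\<lambda>w. (sX (xw w) t, \<xi> t i w)) \<in> measurable M (borel \<Otimes>\<^sub>M D i)"
      using that \<xi>m by (intro measurable_Pair) auto
    from measurable_comp[OF this gFm[OF that(1)]] show ?thesis by (simp add: comp_def)
  qed
  ultimately show ?thesis unfolding eb_def gb_def
    by (auto intro!: borel_measurable_scaleR borel_measurable_sum simp: xw_def)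
qed

lemma Ph_prob: "prob_space (Ph t)"
  unfolding Ph_def using N1 by (intro prob_space_PiM M'_prob) (auto simp: Kh_def)

lemma Pc_prob: "prob_space (Pc t)"
  unfolding Pc_def by (intro prob_space_PiM M'_prob) (auto simp: Kc_def)

lemma PN_prob: "prob_space PN"
  unfolding PN_def using Dp by (intro prob_space_PiM) auto

lemma HC_meas: "(\<lambda>w. (Hh t w, Cc t w)) \<in> measurable M (Ph t \<Otimes>\<^sub>M Pc t)"
  using Hh_meas Cc_meas by (intro measurable_Pair)

lemma nn_transfer:
  assumes F: "F \<in> borel_measurable (Ph t \<Otimes>\<^sub>M Pc t)"
  shows "(\<integral>\<^sup>+w. F (Hh t w, Cc t w) \<partial>M) = (\<integral>\<^sup>+x. (\<integral>\<^sup>+y. F (x, y) \<partial>Pc t) \<partial>Ph t)"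
proof -
  interpret A: prob_space "Ph t" by (rule Ph_prob)
  interpret B: prob_space "Pc t" by (rule Pc_prob)
  interpret AB: pair_prob_space "Ph t" "Pc t" ..
  have "(\<integral>\<^sup>+w. F (Hh t w, Cc t w) \<partial>M) = (\<integral>\<^sup>+p. F p \<partial>distr M (Ph t \<Otimes>\<^sub>M Pc t) (\<lambda>w. (Hh t w, Cc t w)))"
    using F by (subst nn_integral_distr[OF HC_meas]) auto
  also have "\<dots> = (\<integral>\<^sup>+p. F p \<partial>(Ph t \<Otimes>\<^sub>M Pc t))" by (simp add: split)
  also have "\<dots> = (\<integral>\<^sup>+x. (\<integral>\<^sup>+y. F (x, y) \<partial>Pc t) \<partial>Ph t)"
    using B.nn_integral_fst[OF F] by simp
  finally show ?thesis .
qed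

lemma int_transfer:
  fixes F :: "_ \<Rightarrow> real"
  assumes F: "F \<in> borel_measurable (Ph t \<Otimes>\<^sub>M Pc t)" and int: "integrable M (\<lambda>w. F (Hh t w, Cc t w))"
  shows "(\<integral>w. F (Hh t w, Cc t w) \<partial>M) = (\<integral>x. (\<integral>y. F (x, y) \<partial>Pc t) \<partial>Ph t)"
proof -
  interpret A: prob_space "Ph t" by (rule Ph_prob)
  interpret B: prob_space "Pc t" by (rule Pc_prob)
  interpret AB: pair_prob_space "Ph t" "Pc t" ..
  have intF: "integrable (Ph t \<Otimes>\<^sub>M Pc t) F"
    using integrable_distr_eq[OF HC_meas F] int split by simp
  have "(\<integral>w. F (Hh t w, Cc t w) \<partial>M) = integral\<^sup>L (distr M (Ph t \<Otimes>\<^sub>M Pc t) (\<lambda>w. (Hh t w, Cc t w))) F"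
    using integral_distr[OF HC_meas F] by simp
  also have "\<dots> = integral\<^sup>L (Ph t \<Otimes>\<^sub>M Pc t) F" by (simp add: split)
  also have "\<dots> = (\<integral>x. (\<integral>y. F (x, y) \<partial>Pc t) \<partial>Ph t)"
    by (rule AB.integral_fst'[OF intF, symmetric])
  finally show ?thesis .
qed

definition gm where "gm X z = (1 / real N) *\<^sub>R (\<Sum>i<N. gF X (z i))"

lemma gF_meas1: "i < N \<Longrightarrow> gF X \<in> borel_measurable (D i)"
proof -
  assume i: "i < N"
  have "(\<lambda>z. (X, z)) \<in> measurable (D i) (borel \<Otimes>\<^sub>M D i)" by (intro measurable_Pair measurable_const measurable_ident) auto
  from measurable_comp[OF this gFm[OF i]] show ?thesis by (simp add: comp_def)
qed

lemma gm_meas: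
  assumes X: "X \<in> borel_measurable \<Omega>" and Z: "\<And>i. i < N \<Longrightarrow> (\<lambda>w. Z w i) \<in> measurable \<Omega> (D i)"
  shows "(\<lambda>w. gm (X w) (Z w)) \<in> borel_measurable \<Omega>"
proof -
  have "(\<lambda>w. gF (X w) (Z w i)) \<in> borel_measurable \<Omega>" if i: "i < N" for i
  proof -
    have "(\<lambda>w. (X w, Z w i)) \<in> measurable \<Omega> (borel \<Otimes>\<^sub>M D i)"
      using X Z[OF i] by (intro measurable_Pair)
    from measurable_comp[OF this gFm[OF i]] show ?thesis by (simp add: comp_def)
  qed
  then show ?thesis unfolding gm_def by (auto intro!: borel_measurable_scaleR borel_measurable_sum)
qed

lemma gb_eq: "gb (xw w) t = gm (sX (xsH (Hh t w)) t) (yN t (Cc t w))"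
proof -
  have "(\<Sum>i<N. gF (sX (xw w) t) (xw w t i)) = (\<Sum>i<N. gF (sX (xsH (Hh t w)) t) (yN t (Cc t w) i))"
    by (rule sum.cong) (use cong_w[of w t] yN_w in \<open>auto simp: xw_def\<close>)
  then show ?thesis unfolding gb_def gm_def by simp
qed

lemma FXY_meas:
  "(\<lambda>p. gm (sX (xsH (fst p)) t) (yN t (snd p))) \<in> borel_measurable (Ph t \<Otimes>\<^sub>M Pc t)"
  "(\<lambda>p. sX (xsH (fst p)) t) \<in> borel_measurable (Ph t \<Otimes>\<^sub>M Pc t)"
  "(\<lambda>p. sM (xsH (fst p)) t) \<in> borel_measurable (Ph t \<Otimes>\<^sub>M Pc t)"
  "(\<lambda>p. eb (xsH (fst p)) t) \<in> borel_measurable (Ph t \<Otimes>\<^sub>M Pc t)"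
proof -
  show X: "(\<lambda>p. sX (xsH (fst p)) t) \<in> borel_measurable (Ph t \<Otimes>\<^sub>M Pc t)"
    using measurable_compose[OF measurable_fst] state_meas_H by blast
  show "(\<lambda>p. sM (xsH (fst p)) t) \<in> borel_measurable (Ph t \<Otimes>\<^sub>M Pc t)"
    using measurable_compose[OF measurable_fst] state_meas_H by blast
  show "(\<lambda>p. eb (xsH (fst p)) t) \<in> borel_measurable (Ph t \<Otimes>\<^sub>M Pc t)"
    using measurable_compose[OF measurable_fst] state_meas_H by blast
  show "(\<lambda>p. gm (sX (xsH (fst p)) t) (yN t (snd p))) \<in> borel_measurable (Ph t \<Otimes>\<^sub>M Pc t)"
  proof (rule gm_meas[OF X])
    fix i assume i: "i < N"
    have "(\<lambda>y. y (t, i)) \<in> measurable (Pc t) (M' (t, i))"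
      unfolding Pc_def using i by (intro measurable_component_singleton) (auto simp: Kc_def)
    then have "(\<lambda>y. yN t y i) \<in> measurable (Pc t) (D i)"
      using i by (simp add: yN_def M'_def)
    then show "(\<lambda>p. yN t (snd p) i) \<in> measurable (Ph t \<Otimes>\<^sub>M Pc t) (D i)"
      by (rule measurable_compose[OF measurable_snd])
  qed
qed

lemma E_g: "integrable M (\<lambda>w. (norm (gb (xw w) t))\<^sup>2) \<and> (\<integral>w. (norm (gb (xw w) t))\<^sup>2 \<partial>M) \<le> G2"
proof -
  interpret A: prob_space "Ph t" by (rule Ph_prob)
  define F where "F p = ennreal ((norm (gm (sX (xsH (fst p)) t) (yN t (snd p))))\<^sup>2)" for p
  have Fm: "F \<in> borel_measurable (Ph t \<Otimes>\<^sub>M Pc t)" unfolding F_def using FXY_meas(1) by measurable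
  have "(\<integral>\<^sup>+w. ennreal ((norm (gb (xw w) t))\<^sup>2) \<partial>M) = (\<integral>\<^sup>+w. F (Hh t w, Cc t w) \<partial>M)"
    by (simp add: F_def gb_eq)
  also have "\<dots> = (\<integral>\<^sup>+x. (\<integral>\<^sup>+y. F (x, y) \<partial>Pc t) \<partial>Ph t)" by (rule nn_transfer[OF Fm])
  also have "\<dots> \<le> (\<integral>\<^sup>+x. ennreal G2 \<partial>Ph t)"
  proof (rule nn_integral_mono)
    fix x
    have "(\<integral>\<^sup>+y. F (x, y) \<partial>Pc t) = (\<integral>\<^sup>+z. ennreal ((norm (gm (sX (xsH x) t) z))\<^sup>2) \<partial>distr (Pc t) PN (yN t))"
    proof (subst nn_integral_distr[OF yN_meas])
      have "(\<lambda>z. gm (sX (xsH x) t) z) \<in> borel_measurable PN"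
        by (rule gm_meas) (auto simp: PN_def intro!: measurable_component_singleton)
      then show "(\<lambda>z. ennreal ((norm (gm (sX (xsH x) t) z))\<^sup>2)) \<in> borel_measurable (distr (Pc t) PN (yN t))"
        by simp
    qed (simp add: F_def)
    also have "\<dots> = (\<integral>\<^sup>+z. ennreal ((norm (gm (sX (xsH x) t) z))\<^sup>2) \<partial>PN)" by (simp only: reindex)
    also have "\<dots> \<le> ennreal G2" unfolding gm_def PN_def by (rule sm)
    finally show "(\<integral>\<^sup>+y. F (x, y) \<partial>Pc t) \<le> ennreal G2" .
  qed
  also have "\<dots> = ennreal G2" by (simp add: A.emeasure_space_1)
  finally have b: "(\<integral>\<^sup>+w. ennreal ((norm (gb (xw w) t))\<^sup>2) \<partial>M) \<le> ennreal G2" .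
  have gm: "(\<lambda>w. gb (xw w) t) \<in> borel_measurable M" using state_meas_M by blast
  show ?thesis using sq_int[OF gm b G2] by blast
qed

lemma gm_minus: "gm X z - grad_f X = (1 / real N) *\<^sub>R (\<Sum>i<N. gF X (z i) - grad_fi i X)"
  unfolding gm_def gavg by (simp add: sum_subtractf scaleR_diff_right)

lemma comp_PN: "i < N \<Longrightarrow> distr PN (D i) (\<lambda>z. z i) = D i"
  unfolding PN_def by (rule distr_PiM_component[OF Dp]) auto

lemma compm_PN: "i < N \<Longrightarrow> (\<lambda>z. z i) \<in> measurable PN (D i)"
  unfolding PN_def by (rule measurable_component_singleton) auto

lemma a_facts:
  assumes i: "i < N"
  shows "(\<lambda>z. gF X z - grad_fi i X) \<in> borel_measurable (D i)"
    and "integrable (D i) (\<lambda>z. gF X z - grad_fi i X)"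
    and "(\<integral>z. gF X z - grad_fi i X \<partial>D i) = 0"
proof -
  interpret Di: prob_space "D i" by (rule Dp[OF i])
  show "(\<lambda>z. gF X z - grad_fi i X) \<in> borel_measurable (D i)"
    using gF_meas1[OF i] by measurable
  show "integrable (D i) (\<lambda>z. gF X z - grad_fi i X)"
    using unb[OF i] by auto
  show "(\<integral>z. gF X z - grad_fi i X \<partial>D i) = 0"
    using unb[OF i, of X] by (simp add: Bochner_Integration.integral_diff Di.prob_space)
qed

lemma var_PN: "(\<integral>\<^sup>+z. ennreal ((norm (gm X z - grad_f X))\<^sup>2) \<partial>PN) \<le> ennreal (\<sigma>2 / real N)"
proof -
  have vp: "(\<integral>\<^sup>+z. ennreal ((norm (\<Sum>i<N. gF X (z i) - grad_fi i X))\<^sup>2) \<partial>PN) \<le> ennreal (real N * \<sigma>2)"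
    unfolding PN_def
    by (rule var_prod[OF Dp a_facts(1) a_facts(2) a_facts(3) var \<sigma>2])
  have m: "(\<lambda>z. ennreal ((norm (\<Sum>i<N. gF X (z i) - grad_fi i X))\<^sup>2)) \<in> borel_measurable PN"
  proof -
    have "(\<lambda>z. gF X (z i) - grad_fi i X) \<in> borel_measurable PN" if "i < N" for i
      using measurable_compose[OF compm_PN[OF that] a_facts(1)[OF that]] .
    then show ?thesis by (auto intro!: borel_measurable_sum)
  qed
  have "(\<integral>\<^sup>+z. ennreal ((norm (gm X z - grad_f X))\<^sup>2) \<partial>PN)
      = (\<integral>\<^sup>+z. ennreal ((1 / real N)\<^sup>2) * ennreal ((norm (\<Sum>i<N. gF X (z i) - grad_fi i X))\<^sup>2) \<partial>PN)"
  proof (rule nn_integral_cong)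
    fix z
    have "(norm ((1 / real N) *\<^sub>R (\<Sum>i<N. gF X (z i) - grad_fi i X)))\<^sup>2 = (1 / real N)\<^sup>2 * (norm (\<Sum>i<N. gF X (z i) - grad_fi i X))\<^sup>2"
      by (simp add: power_divide)
    then show "ennreal ((norm (gm X z - grad_f X))\<^sup>2) = ennreal ((1 / real N)\<^sup>2) * ennreal ((norm (\<Sum>i<N. gF X (z i) - grad_fi i X))\<^sup>2)"
      unfolding gm_minus by (simp add: ennreal_mult[symmetric])
  qed
  also have "\<dots> = ennreal ((1 / real N)\<^sup>2) * (\<integral>\<^sup>+z. ennreal ((norm (\<Sum>i<N. gF X (z i) - grad_fi i X))\<^sup>2) \<partial>PN)"
    by (rule nn_integral_cmult[OF m])
  also have "\<dots> \<le> ennreal ((1 / real N)\<^sup>2) * ennreal (real N * \<sigma>2)"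
    by (rule mult_left_mono[OF vp]) simp
  also have "\<dots> = ennreal (\<sigma>2 / real N)"
    using N1 \<sigma>2 by (simp add: ennreal_mult''[symmetric] power2_eq_square)
  finally show ?thesis .
qed

lemma mean_PN: "integrable PN (\<lambda>z. gm X z - grad_f X) \<and> (\<integral>z. gm X z - grad_f X \<partial>PN) = 0"
proof -
  have each: "integrable PN (\<lambda>z. gF X (z i) - grad_fi i X) \<and> (\<integral>z. gF X (z i) - grad_fi i X \<partial>PN) = 0" if i: "i < N" for i
  proof -
    have "integrable PN (\<lambda>z. gF X (z i) - grad_fi i X)"
      using integrable_distr_eq[OF compm_PN[OF i] a_facts(1)[OF i]] comp_PN[OF i] a_facts(2)[OF i] by simp
    moreover have "(\<integral>z. gF X (z i) - grad_fi i X \<partial>PN) = 0"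
      using integral_distr[OF compm_PN[OF i] a_facts(1)[OF i]] comp_PN[OF i] a_facts(3)[OF i] by simp
    ultimately show ?thesis ..
  qed
  have "integrable PN (\<lambda>z. (1 / real N) *\<^sub>R (\<Sum>i<N. gF X (z i) - grad_fi i X))"
    using each by (intro integrable_scaleR_right Bochner_Integration.integrable_sum) auto
  moreover have "(\<integral>z. (1 / real N) *\<^sub>R (\<Sum>i<N. gF X (z i) - grad_fi i X) \<partial>PN) = 0"
  proof -
    have "(\<integral>z. (\<Sum>i<N. gF X (z i) - grad_fi i X) \<partial>PN) = (\<Sum>i<N. (\<integral>z. gF X (z i) - grad_fi i X \<partial>PN))"
      using each by (intro Bochner_Integration.integral_sum) auto
    also have "\<dots> = 0" using each by simp
    finally show ?thesis by simp
  qed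
  ultimately show ?thesis unfolding gm_minus by simp
qed

lemma E_u: "integrable M (\<lambda>w. (norm (gb (xw w) t - grad_f (sX (xw w) t)))\<^sup>2) \<and>
   (\<integral>w. (norm (gb (xw w) t - grad_f (sX (xw w) t)))\<^sup>2 \<partial>M) \<le> \<sigma>2 / real N"
proof -
  interpret A: prob_space "Ph t" by (rule Ph_prob)
  define F where "F p = ennreal ((norm (gm (sX (xsH (fst p)) t) (yN t (snd p)) - grad_f (sX (xsH (fst p)) t)))\<^sup>2)" for p
  have Fm: "F \<in> borel_measurable (Ph t \<Otimes>\<^sub>M Pc t)" unfolding F_def
    using FXY_meas(1,2) measurable_compose[OF FXY_meas(2) gfm] by measurable
  have "(\<integral>\<^sup>+w. ennreal ((norm (gb (xw w) t - grad_f (sX (xw w) t)))\<^sup>2) \<partial>M) = (\<integral>\<^sup>+w. F (Hh t w, Cc t w) \<partial>M)"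
    using cong_w by (simp add: F_def gb_eq)
  also have "\<dots> = (\<integral>\<^sup>+x. (\<integral>\<^sup>+y. F (x, y) \<partial>Pc t) \<partial>Ph t)" by (rule nn_transfer[OF Fm])
  also have "\<dots> \<le> (\<integral>\<^sup>+x. ennreal (\<sigma>2 / real N) \<partial>Ph t)"
  proof (rule nn_integral_mono)
    fix x
    have gmm: "(\<lambda>z. gm (sX (xsH x) t) z) \<in> borel_measurable PN"
      by (rule gm_meas) (auto simp: PN_def intro!: measurable_component_singleton)
    have "(\<integral>\<^sup>+y. F (x, y) \<partial>Pc t) = (\<integral>\<^sup>+z. ennreal ((norm (gm (sX (xsH x) t) z - grad_f (sX (xsH x) t)))\<^sup>2) \<partial>distr (Pc t) PN (yN t))"
      by (subst nn_integral_distr[OF yN_meas]) (use gmm in \<open>auto simp: F_def\<close>)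
    also have "\<dots> = (\<integral>\<^sup>+z. ennreal ((norm (gm (sX (xsH x) t) z - grad_f (sX (xsH x) t)))\<^sup>2) \<partial>PN)" by (simp only: reindex)
    also have "\<dots> \<le> ennreal (\<sigma>2 / real N)" by (rule var_PN)
    finally show "(\<integral>\<^sup>+y. F (x, y) \<partial>Pc t) \<le> ennreal (\<sigma>2 / real N)" .
  qed
  also have "\<dots> = ennreal (\<sigma>2 / real N)" by (simp add: A.emeasure_space_1)
  finally have b: "(\<integral>\<^sup>+w. ennreal ((norm (gb (xw w) t - grad_f (sX (xw w) t)))\<^sup>2) \<partial>M) \<le> ennreal (\<sigma>2 / real N)" .
  have gm: "(\<lambda>w. gb (xw w) t - grad_f (sX (xw w) t)) \<in> borel_measurable M"
  proof -
    have a: "(\<lambda>w. gb (xw w) t) \<in> borel_measurable M" "(\<lambda>w. sX (xw w) t) \<in> borel_measurable M"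
      using state_meas_M by blast+
    show ?thesis using a(1) measurable_compose[OF a(2) gfm] by (rule borel_measurable_diff)
  qed
  show ?thesis using sq_int[OF gm b] \<sigma>2 by auto
qed

lemma E_V:
  fixes \<Phi> :: "(real^('n::{finite,wellorder})^('m::{finite,wellorder})) \<times> (real^('n::{finite,wellorder})^('m::{finite,wellorder})) \<times> (real^('n::{finite,wellorder})^('m::{finite,wellorder})) \<Rightarrow> real^('n::{finite,wellorder})^('m::{finite,wellorder})"
  assumes \<Phi>m: "\<Phi> \<in> borel_measurable borel" and \<Phi>b: "\<And>p. norm (\<Phi> p) \<le> B"
  shows "integrable M (\<lambda>w. \<Phi> (sX (xw w) t, sM (xw w) t, eb (xw w) t) \<bullet> (gb (xw w) t - grad_f (sX (xw w) t)))
    \<and> (\<integral>w. \<Phi> (sX (xw w) t, sM (xw w) t, eb (xw w) t) \<bullet> (gb (xw w) t - grad_f (sX (xw w) t)) \<partial>M) = 0"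
proof -
  let ?V = "\<lambda>w. \<Phi> (sX (xw w) t, sM (xw w) t, eb (xw w) t)"
  let ?u = "\<lambda>w. gb (xw w) t - grad_f (sX (xw w) t)"
  have sm: "(\<lambda>w. sX (xw w) t) \<in> borel_measurable M" "(\<lambda>w. sM (xw w) t) \<in> borel_measurable M"
    "(\<lambda>w. eb (xw w) t) \<in> borel_measurable M" "(\<lambda>w. gb (xw w) t) \<in> borel_measurable M"
    using state_meas_M by blast+
  have Vm: "?V \<in> borel_measurable M"
    using measurable_compose[OF _ \<Phi>m] sm by measurable
  have um: "?u \<in> borel_measurable M"
    using sm(4) measurable_compose[OF sm(1) gfm] by (rule borel_measurable_diff)
  have intu: "integrable M (\<lambda>w. (norm (?u w))\<^sup>2)" using E_u by blast
  have int: "integrable M (\<lambda>w. ?V w \<bullet> ?u w)"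
  proof (rule Bochner_Integration.integrable_bound)
    show "integrable M (\<lambda>w. B\<^sup>2 + (norm (?u w))\<^sup>2)" using intu by simp
    show "(\<lambda>w. ?V w \<bullet> ?u w) \<in> borel_measurable M" using Vm um by measurable
    show "AE w in M. norm (?V w \<bullet> ?u w) \<le> norm (B\<^sup>2 + (norm (?u w))\<^sup>2)"
    proof (rule AE_I2)
      fix w
      have "norm (?V w \<bullet> ?u w) \<le> (norm (?V w))\<^sup>2 + (norm (?u w))\<^sup>2" using inner_le_sq by simp
      also have "(norm (?V w))\<^sup>2 \<le> B\<^sup>2"
        using \<Phi>b norm_ge_zero by (intro power_mono) auto
      finally show "norm (?V w \<bullet> ?u w) \<le> norm (B\<^sup>2 + (norm (?u w))\<^sup>2)" by simp
    qed
  qed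
  interpret A: prob_space "Ph t" by (rule Ph_prob)
  define F where "F p = \<Phi> (sX (xsH (fst p)) t, sM (xsH (fst p)) t, eb (xsH (fst p)) t) \<bullet>
      (gm (sX (xsH (fst p)) t) (yN t (snd p)) - grad_f (sX (xsH (fst p)) t))" for p
  have Fm: "F \<in> borel_measurable (Ph t \<Otimes>\<^sub>M Pc t)"
  proof -
    have "(\<lambda>p. \<Phi> (sX (xsH (fst p)) t, sM (xsH (fst p)) t, eb (xsH (fst p)) t)) \<in> borel_measurable (Ph t \<Otimes>\<^sub>M Pc t)"
      using measurable_compose[OF _ \<Phi>m] FXY_meas(2-4) by measurable
    then show ?thesis unfolding F_def
      using FXY_meas(1,2) measurable_compose[OF FXY_meas(2) gfm] by measurable
  qed
  have FHC: "?V w \<bullet> ?u w = F (Hh t w, Cc t w)" for w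
    using cong_w[of w t] eb_w[of w t] by (simp add: F_def gb_eq)
  have "(\<integral>w. ?V w \<bullet> ?u w \<partial>M) = (\<integral>w. F (Hh t w, Cc t w) \<partial>M)" by (simp add: FHC)
  also have "\<dots> = (\<integral>x. (\<integral>y. F (x, y) \<partial>Pc t) \<partial>Ph t)"
    by (rule int_transfer[OF Fm]) (use int in \<open>simp add: FHC\<close>)
  also have "\<dots> = (\<integral>x. 0 \<partial>Ph t)"
  proof (rule Bochner_Integration.integral_cong[OF refl])
    fix x
    let ?v = "\<Phi> (sX (xsH x) t, sM (xsH x) t, eb (xsH x) t)" and ?X = "sX (xsH x) t"
    have gmm: "(\<lambda>z. gm ?X z) \<in> borel_measurable PN"
      by (rule gm_meas) (auto simp: PN_def intro!: measurable_component_singleton)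
    have hm: "(\<lambda>z. ?v \<bullet> (gm ?X z - grad_f ?X)) \<in> borel_measurable PN" using gmm by measurable
    have "(\<integral>y. F (x, y) \<partial>Pc t) = (\<integral>z. ?v \<bullet> (gm ?X z - grad_f ?X) \<partial>distr (Pc t) PN (yN t))"
      using integral_distr[OF yN_meas hm] by (simp add: F_def)
    also have "\<dots> = (\<integral>z. ?v \<bullet> (gm ?X z - grad_f ?X) \<partial>PN)" by (simp only: reindex)
    also have "\<dots> = ?v \<bullet> (\<integral>z. gm ?X z - grad_f ?X \<partial>PN)"
      using mean_PN[of ?X] by (intro integral_inner_right) auto
    also have "\<dots> = 0" using mean_PN[of ?X] by simp
    finally show "(\<integral>y. F (x, y) \<partial>Pc t) = 0" .
  qed
  also have "\<dots> = 0" by simp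
  finally show ?thesis using int by simp
qed

end


(* ---- Main1 ---- *)


lemma cs_weighted:
  fixes w a :: "nat \<Rightarrow> real"
  assumes w: "\<And>s. s \<in> S \<Longrightarrow> 0 \<le> w s"
  shows "(\<Sum>s\<in>S. w s * a s)\<^sup>2 \<le> (\<Sum>s\<in>S. w s) * (\<Sum>s\<in>S. w s * (a s)\<^sup>2)"
proof -
  have "(\<Sum>s\<in>S. w s * a s) = (\<Sum>s\<in>S. sqrt (w s) * (sqrt (w s) * a s))"
    using w by (intro sum.cong refl) (simp add: mult.assoc[symmetric])
  also have "(\<dots>)\<^sup>2 \<le> (\<Sum>s\<in>S. (sqrt (w s))\<^sup>2) * (\<Sum>s\<in>S. (sqrt (w s) * a s)\<^sup>2)"
    by (rule Cauchy_Schwarz_ineq_sum)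
  also have "(\<Sum>s\<in>S. (sqrt (w s))\<^sup>2) = (\<Sum>s\<in>S. w s)" using w by (intro sum.cong) auto
  also have "(\<Sum>s\<in>S. (sqrt (w s) * a s)\<^sup>2) = (\<Sum>s\<in>S. w s * (a s)\<^sup>2)"
    using w by (intro sum.cong) (auto simp: power_mult_distrib)
  finally show ?thesis .
qed

lemma aux_W: "\<mu> < 1 \<Longrightarrow> \<mu> * ((1 + K) / (1 - \<mu>)) + K = (1 + K) / (1 - \<mu>) - (1::real)"
  by (simp add: field_simps)

context alg
begin

lemma XZ_path:
  assumes qrP: "\<And>A. is_econ_QR A (qr A)" and svdP: "\<And>A. is_top_left_sv A (svd A)"
    and rn: "CARD('r::{finite,wellorder}) \<le> CARD('n::{finite,wellorder})" and nm: "CARD('n::{finite,wellorder}) \<le> CARD('m::{finite,wellorder})"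
    and q: "q = sqrt (1 - real CARD('r::{finite,wellorder}) / real CARD('n::{finite,wellorder}))"
    and mu: "0 \<le> \<mu>" "\<mu> < 1" and tau: "1 \<le> \<tau>"
    and W: "W = (1 + real \<tau> / (1 - q)) / (1 - \<mu>)"
  shows "(norm (sX xs t - Zv \<gamma> xs t))\<^sup>2 \<le> \<gamma>\<^sup>2 * W * (\<Sum>s<t. (\<mu> * dw q t s + cw q t s) * (norm (gb xs s))\<^sup>2)"
    and "(\<Sum>s<t. \<mu> * dw q t s + cw q t s) \<le> W"
    and "\<And>s. 0 \<le> \<mu> * dw q t s + cw q t s"
proof -
  have rn1: "real CARD('r::{finite,wellorder}) / real CARD('n::{finite,wellorder}) \<le> 1" using rn by (simp add: divide_le_eq_1)
  have rpos: "0 < real CARD('r::{finite,wellorder}) / real CARD('n::{finite,wellorder})" by simp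
  have q0: "0 \<le> q" unfolding q using rn1 by simp
  have q1: "q < 1" unfolding q using rpos rn1 by simp
  have wnn: "0 \<le> \<mu> * dw q t s + cw q t s" for s using q0 mu by (simp add: dw_nn cw_nn)
  then show "\<And>s. 0 \<le> \<mu> * dw q t s + cw q t s" .
  let ?K = "real \<tau> / (1 - q)"
  have cb: "\<And>t. (\<Sum>s<t. cw q t s) \<le> ?K" using sum_cw_bound[OF q0 q1 tau] .
  have db: "(\<Sum>s<t. dw q t s) \<le> (1 + ?K) / (1 - \<mu>)" by (rule sum_dw_bound[OF q0 cb mu])
  show wsum: "(\<Sum>s<t. \<mu> * dw q t s + cw q t s) \<le> W"
  proof -
    have "(\<Sum>s<t. \<mu> * dw q t s + cw q t s) = \<mu> * (\<Sum>s<t. dw q t s) + (\<Sum>s<t. cw q t s)"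
      by (simp add: sum.distrib sum_distrib_left)
    also have "\<dots> \<le> \<mu> * ((1 + ?K) / (1 - \<mu>)) + ?K"
      using db cb[of t] mu by (intro add_mono mult_left_mono) auto
    also have "\<dots> = (1 + ?K) / (1 - \<mu>) - 1" using mu aux_W by blast
    also have "\<dots> \<le> W" unfolding W by simp
    finally show ?thesis .
  qed
  have pb: "norm (eb xs t) \<le> (\<Sum>s<t. cw q t s * norm (gb xs s)) \<and> norm (sM xs t) \<le> (\<Sum>s<t. dw q t s * norm (gb xs s))"
    by (rule path_bounds[OF qrP svdP rn nm q mu(1)])
  have "norm (\<mu> *\<^sub>R sM xs t + eb xs t) \<le> \<mu> * norm (sM xs t) + norm (eb xs t)"
    using norm_triangle_ineq[of "\<mu> *\<^sub>R sM xs t" "eb xs t"] mu by simp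
  also have "\<dots> \<le> \<mu> * (\<Sum>s<t. dw q t s * norm (gb xs s)) + (\<Sum>s<t. cw q t s * norm (gb xs s))"
    using pb mu by (intro add_mono mult_left_mono) auto
  also have "\<dots> = (\<Sum>s<t. (\<mu> * dw q t s + cw q t s) * norm (gb xs s))"
    by (simp add: sum.distrib sum_distrib_left algebra_simps)
  finally have nb: "norm (\<mu> *\<^sub>R sM xs t + eb xs t) \<le> (\<Sum>s<t. (\<mu> * dw q t s + cw q t s) * norm (gb xs s))" .
  have "(norm (sX xs t - Zv \<gamma> xs t))\<^sup>2 = \<gamma>\<^sup>2 * (norm (\<mu> *\<^sub>R sM xs t + eb xs t))\<^sup>2"
    unfolding X_minus_Z by (simp add: power_mult_distrib)
  also have "\<dots> \<le> \<gamma>\<^sup>2 * (\<Sum>s<t. (\<mu> * dw q t s + cw q t s) * norm (gb xs s))\<^sup>2"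
    using nb by (intro mult_left_mono power_mono) auto
  also have "\<dots> \<le> \<gamma>\<^sup>2 * ((\<Sum>s<t. \<mu> * dw q t s + cw q t s) * (\<Sum>s<t. (\<mu> * dw q t s + cw q t s) * (norm (gb xs s))\<^sup>2))"
    using cs_weighted[of "{..<t}" "\<lambda>s. \<mu> * dw q t s + cw q t s" "\<lambda>s. norm (gb xs s)"] wnn
    by (intro mult_left_mono) auto
  also have "\<dots> \<le> \<gamma>\<^sup>2 * (W * (\<Sum>s<t. (\<mu> * dw q t s + cw q t s) * (norm (gb xs s))\<^sup>2))"
    using wsum wnn by (intro mult_left_mono mult_right_mono sum_nonneg) auto
  finally show "(norm (sX xs t - Zv \<gamma> xs t))\<^sup>2 \<le> \<gamma>\<^sup>2 * W * (\<Sum>s<t. (\<mu> * dw q t s + cw q t s) * (norm (gb xs s))\<^sup>2)"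
    by (simp add: mult.assoc)
qed

end

lemma step_ineq:
  fixes a bz u :: "'v::real_inner"
  assumes desc: "fZ' \<le> fZ + bz \<bullet> (- (\<gamma> *\<^sub>R (a + u))) + L / 2 * (norm (\<gamma> *\<^sub>R (a + u)))\<^sup>2"
    and lip: "norm (bz - a) \<le> L * d" and g: "0 \<le> \<gamma>" and L: "0 \<le> L" and Lg: "L * \<gamma> \<le> 1 / 2" and d: "0 \<le> d"
  shows "\<gamma> / 4 * (norm a)\<^sup>2 \<le> fZ - fZ' + \<gamma> * L\<^sup>2 / 2 * d\<^sup>2 + L * \<gamma>\<^sup>2 / 2 * (norm u)\<^sup>2 - \<gamma> * ((bz - (L * \<gamma>) *\<^sub>R a) \<bullet> u)"
proof -
  define A where "A = (norm a)\<^sup>2"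
  define U where "U = (norm u)\<^sup>2"
  have A0: "0 \<le> A" unfolding A_def by simp
  have ba: "bz \<bullet> a \<ge> A / 2 - L\<^sup>2 * d\<^sup>2 / 2"
  proof -
    have "(bz - a) \<bullet> a \<ge> - (norm (bz - a) * norm a)"
    proof -
      have "(a - bz) \<bullet> a \<le> norm (a - bz) * norm a" by (rule norm_cauchy_schwarz)
      then have c: "(a - bz) \<bullet> a \<le> norm (bz - a) * norm a" by (simp add: norm_minus_commute)
      have "(a - bz) \<bullet> a = - ((bz - a) \<bullet> a)" by (simp add: inner_diff_left)
      then show ?thesis using c by linarith
    qed
    moreover have "norm (bz - a) * norm a \<le> (L * d) * norm a" using lip by (simp add: mult_right_mono)
    moreover have "(L * d) * norm a \<le> ((L * d)\<^sup>2 + (norm a)\<^sup>2) / 2"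
      using sum_squares_bound[of "L * d" "norm a"] by (simp add: power2_eq_square)
    ultimately have "(bz - a) \<bullet> a \<ge> - (((L * d)\<^sup>2 + (norm a)\<^sup>2) / 2)" by linarith
    moreover have "bz \<bullet> a = (bz - a) \<bullet> a + A" unfolding A_def by (simp add: inner_diff_left power2_norm_eq_inner)
    ultimately show ?thesis unfolding A_def by (simp add: power_mult_distrib field_simps)
  qed
  have n2: "(norm (\<gamma> *\<^sub>R (a + u)))\<^sup>2 = \<gamma>\<^sup>2 * (A + 2 * (a \<bullet> u) + U)"
    unfolding A_def U_def by (simp add: power_mult_distrib power2_norm_eq_inner inner_add_left inner_add_right inner_commute)
  have i1: "bz \<bullet> (- (\<gamma> *\<^sub>R (a + u))) = - \<gamma> * (bz \<bullet> a) - \<gamma> * (bz \<bullet> u)"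
    by (simp add: inner_add_right algebra_simps)
  have i2: "\<gamma> * ((bz - (L * \<gamma>) *\<^sub>R a) \<bullet> u) = \<gamma> * (bz \<bullet> u) - L * \<gamma>\<^sup>2 * (a \<bullet> u)"
    by (simp add: inner_diff_left power2_eq_square algebra_simps)
  have t1: "\<gamma> * (bz \<bullet> a) \<ge> \<gamma> * (A / 2 - L\<^sup>2 * d\<^sup>2 / 2)" using ba g by (rule mult_left_mono)
  have t2: "L * \<gamma>\<^sup>2 / 2 * A \<le> \<gamma> / 4 * A"
  proof -
    have "L * \<gamma>\<^sup>2 / 2 * A = (L * \<gamma>) * (\<gamma> * A) / 2" by (simp add: power2_eq_square)
    also have "\<dots> \<le> (1 / 2) * (\<gamma> * A) / 2" using Lg g A0 by (intro divide_right_mono mult_right_mono) auto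
    finally show ?thesis by simp
  qed
  show ?thesis
    using desc t1 t2 unfolding n2 i1 i2 A_def[symmetric] U_def[symmetric]
    by (simp add: algebra_simps power2_eq_square) 
qed


(* ---- Main2 ---- *)


context setting
begin

lemma XZ_exp:
  assumes qrP: "\<And>A. is_econ_QR A (qr A)" and svdP: "\<And>A. is_top_left_sv A (svd A)"
    and rn: "CARD('r::{finite,wellorder}) \<le> CARD('n::{finite,wellorder})" and nm: "CARD('n::{finite,wellorder}) \<le> CARD('m::{finite,wellorder})"
    and q: "q = sqrt (1 - real CARD('r::{finite,wellorder}) / real CARD('n::{finite,wellorder}))"
    and mu: "0 \<le> \<mu>" "\<mu> < 1" and tau: "1 \<le> \<tau>"
    and W: "W = (1 + real \<tau> / (1 - q)) / (1 - \<mu>)"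
  shows "integrable M (\<lambda>w. (norm (sX (xw w) t - Zv \<gamma> (xw w) t))\<^sup>2) \<and>
    (\<integral>w. (norm (sX (xw w) t - Zv \<gamma> (xw w) t))\<^sup>2 \<partial>M) \<le> \<gamma>\<^sup>2 * W\<^sup>2 * G2"
proof -
  interpret P: prob_space M by (rule Mp)
  let ?w = "\<lambda>s. \<mu> * dw q t s + cw q t s"
  note XP = XZ_path[OF qrP svdP rn nm q mu tau W]
  have W0: "0 \<le> W"
  proof -
    have "0 \<le> (\<Sum>s<t. ?w s)" using XP(3) by (simp add: sum_nonneg)
    then show ?thesis using XP(2)[of t] by linarith
  qed
  have Eg: "integrable M (\<lambda>w. (norm (gb (xw w) s))\<^sup>2)" "(\<integral>w. (norm (gb (xw w) s))\<^sup>2 \<partial>M) \<le> G2" for s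
    using E_g by blast+
  have intB: "integrable M (\<lambda>w. \<gamma>\<^sup>2 * W * (\<Sum>s<t. ?w s * (norm (gb (xw w) s))\<^sup>2))"
    using Eg(1) by (intro integrable_mult_right Bochner_Integration.integrable_sum) auto
  have sm: "(\<lambda>w. sX (xw w) t) \<in> borel_measurable M" "(\<lambda>w. sM (xw w) t) \<in> borel_measurable M"
    "(\<lambda>w. eb (xw w) t) \<in> borel_measurable M"
    using state_meas_M by blast+
  have dm: "(\<lambda>w. (norm (sX (xw w) t - Zv \<gamma> (xw w) t))\<^sup>2) \<in> borel_measurable M"
    unfolding Zv_def using sm by measurable
  have int: "integrable M (\<lambda>w. (norm (sX (xw w) t - Zv \<gamma> (xw w) t))\<^sup>2)"
  proof (rule Bochner_Integration.integrable_bound[OF intB dm])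
    show "AE w in M. norm ((norm (sX (xw w) t - Zv \<gamma> (xw w) t))\<^sup>2) \<le> norm (\<gamma>\<^sup>2 * W * (\<Sum>s<t. ?w s * (norm (gb (xw w) s))\<^sup>2))"
    proof (rule AE_I2)
      fix w
      have "0 \<le> \<gamma>\<^sup>2 * W * (\<Sum>s<t. ?w s * (norm (gb (xw w) s))\<^sup>2)"
        using W0 XP(3) by (intro mult_nonneg_nonneg sum_nonneg) auto
      then show "norm ((norm (sX (xw w) t - Zv \<gamma> (xw w) t))\<^sup>2) \<le> norm (\<gamma>\<^sup>2 * W * (\<Sum>s<t. ?w s * (norm (gb (xw w) s))\<^sup>2))"
        using XP(1)[of "xw w"] by simp
    qed
  qed
  have "(\<integral>w. (norm (sX (xw w) t - Zv \<gamma> (xw w) t))\<^sup>2 \<partial>M) \<le> (\<integral>w. \<gamma>\<^sup>2 * W * (\<Sum>s<t. ?w s * (norm (gb (xw w) s))\<^sup>2) \<partial>M)"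
    using int intB XP(1) by (intro integral_mono) auto
  also have "\<dots> = \<gamma>\<^sup>2 * W * (\<Sum>s<t. ?w s * (\<integral>w. (norm (gb (xw w) s))\<^sup>2 \<partial>M))"
    using Eg(1) by (simp add: Bochner_Integration.integral_sum Bochner_Integration.integral_mult_right_zero)
  also have "\<dots> \<le> \<gamma>\<^sup>2 * W * (\<Sum>s<t. ?w s * G2)"
    using Eg(2) XP(3) W0 by (intro mult_left_mono sum_mono mult_left_mono) auto
  also have "\<dots> = \<gamma>\<^sup>2 * W * ((\<Sum>s<t. ?w s) * G2)" by (simp add: sum_distrib_right)
  also have "\<dots> \<le> \<gamma>\<^sup>2 * W * (W * G2)"
    using XP(2) G2 W0 by (intro mult_left_mono mult_right_mono) auto
  finally show ?thesis using int by (simp add: power2_eq_square mult.assoc)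
qed

lemma main_bound:
  fixes f :: "real^('n::{finite,wellorder})^('m::{finite,wellorder}) \<Rightarrow> real" and L \<omega> \<gamma> W \<Delta> :: real
  assumes f_grad: "\<And>X. (f has_derivative (\<lambda>H. grad_f X \<bullet> H)) (at X)"
    and f_smooth: "\<And>X Y. norm (grad_f X - grad_f Y) \<le> L * norm (X - Y)"
    and f_low: "\<And>X. f X0 - f X \<le> \<Delta>"
    and gbd: "\<And>X. norm (grad_f X) \<le> \<omega>"
    and qrP: "\<And>A. is_econ_QR A (qr A)" and svdP: "\<And>A. is_top_left_sv A (svd A)"
    and rn: "CARD('r::{finite,wellorder}) \<le> CARD('n::{finite,wellorder})" and nm: "CARD('n::{finite,wellorder}) \<le> CARD('m::{finite,wellorder})"
    and q: "q = sqrt (1 - real CARD('r::{finite,wellorder}) / real CARD('n::{finite,wellorder}))"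
    and mu: "0 \<le> \<mu>" "\<mu> < 1" and tau: "1 \<le> \<tau>"
    and W: "W = (1 + real \<tau> / (1 - q)) / (1 - \<mu>)"
    and eta: "\<eta> = \<gamma> * (1 - \<mu>)" and g: "0 < \<gamma>" and L: "0 \<le> L" and Lg: "L * \<gamma> \<le> 1 / 2"
    and T: "1 \<le> T"
  shows "(\<Sum>t<T. \<integral>w. (norm (grad_f (sX (xw w) t)))\<^sup>2 \<partial>M) / real T
     \<le> 4 * \<Delta> / (\<gamma> * real T) + 2 * L\<^sup>2 * \<gamma>\<^sup>2 * W\<^sup>2 * G2 + 2 * L * \<gamma> * \<sigma>2 / real N"
proof -
  interpret P: prob_space M by (rule Mp)
  define a where "a t w = (norm (grad_f (sX (xw w) t)))\<^sup>2" for t w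
  define dd where "dd t w = (norm (sX (xw w) t - Zv \<gamma> (xw w) t))\<^sup>2" for t w
  define uu where "uu t w = (norm (gb (xw w) t - grad_f (sX (xw w) t)))\<^sup>2" for t w
  define \<Phi> :: "(real^('n::{finite,wellorder})^('m::{finite,wellorder})) \<times> (real^('n::{finite,wellorder})^('m::{finite,wellorder})) \<times> (real^('n::{finite,wellorder})^('m::{finite,wellorder})) \<Rightarrow> real^('n::{finite,wellorder})^('m::{finite,wellorder})"
    where "\<Phi> p = grad_f (fst p - (\<gamma> * \<mu>) *\<^sub>R fst (snd p) - \<gamma> *\<^sub>R snd (snd p)) - (L * \<gamma>) *\<^sub>R grad_f (fst p)" for p
  define vv where "vv t w = \<Phi> (sX (xw w) t, sM (xw w) t, eb (xw w) t) \<bullet> (gb (xw w) t - grad_f (sX (xw w) t))" for t w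
  define Z where "Z w t = Zv \<gamma> (xw w) t" for w t
  have \<Phi>Z: "\<Phi> (sX (xw w) t, sM (xw w) t, eb (xw w) t) = grad_f (Z w t) - (L * \<gamma>) *\<^sub>R grad_f (sX (xw w) t)" for w t
    by (simp add: \<Phi>_def Z_def Zv_def)
    have path: "\<gamma> / 4 * a t w \<le> f (Z w t) - f (Z w (Suc t)) + \<gamma> * L\<^sup>2 / 2 * dd t w + L * \<gamma>\<^sup>2 / 2 * uu t w - \<gamma> * vv t w" for t w
  proof -
    let ?X = "sX (xw w) t" and ?g = "gb (xw w) t"
    have Zs: "Z w (Suc t) = Z w t - \<gamma> *\<^sub>R ?g" unfolding Z_def by (rule Zv_step[OF eta])
    have desc: "f (Z w (Suc t)) \<le> f (Z w t) + grad_f (Z w t) \<bullet> (Z w (Suc t) - Z w t) + L / 2 * (norm (Z w (Suc t) - Z w t))\<^sup>2"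
      by (rule descent[OF f_grad f_smooth])
    have gsplit: "?g = grad_f ?X + (?g - grad_f ?X)" by simp
    have desc': "f (Z w (Suc t)) \<le> f (Z w t) + grad_f (Z w t) \<bullet> (- (\<gamma> *\<^sub>R (grad_f ?X + (?g - grad_f ?X)))) + L / 2 * (norm (\<gamma> *\<^sub>R (grad_f ?X + (?g - grad_f ?X))))\<^sup>2"
      using desc unfolding Zs by simp
    have lip: "norm (grad_f (Z w t) - grad_f ?X) \<le> L * norm (?X - Z w t)"
      using f_smooth[of "Z w t" ?X] by (simp add: norm_minus_commute)
    from step_ineq[OF desc' lip less_imp_le[OF g] L Lg norm_ge_zero]
    show ?thesis unfolding a_def dd_def uu_def vv_def \<Phi>Z Z_def by simp
  qed
    have Z0: "Z w 0 = X0" for w by (simp add: Z_def Zv_def init eb_def)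
  have sumpath: "\<gamma> / 4 * (\<Sum>t<T. a t w) \<le> \<Delta> + (\<Sum>t<T. \<gamma> * L\<^sup>2 / 2 * dd t w + L * \<gamma>\<^sup>2 / 2 * uu t w - \<gamma> * vv t w)" for w
  proof -
    have "\<gamma> / 4 * (\<Sum>t<T. a t w) = (\<Sum>t<T. \<gamma> / 4 * a t w)" by (simp add: sum_distrib_left)
    also have "\<dots> \<le> (\<Sum>t<T. (f (Z w t) - f (Z w (Suc t))) + (\<gamma> * L\<^sup>2 / 2 * dd t w + L * \<gamma>\<^sup>2 / 2 * uu t w - \<gamma> * vv t w))"
      using path by (intro sum_mono) (simp add: algebra_simps)
    also have "\<dots> = (f (Z w 0) - f (Z w T)) + (\<Sum>t<T. \<gamma> * L\<^sup>2 / 2 * dd t w + L * \<gamma>\<^sup>2 / 2 * uu t w - \<gamma> * vv t w)"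
      using sum_lessThan_telescope'[of "\<lambda>t. f (Z w t)" T] by (simp add: sum.distrib)
    also have "f (Z w 0) - f (Z w T) \<le> \<Delta>" using f_low[of "Z w T"] by (simp add: Z0)
    finally show ?thesis by simp
  qed
    have sm: "(\<lambda>w. sX (xw w) t) \<in> borel_measurable M" for t using state_meas_M by blast
  have \<omega>0: "0 \<le> \<omega>" using gbd[of X0] norm_ge_zero[of "grad_f X0"] by linarith
  have int_a: "integrable M (a t)" for t
  proof (rule Bochner_Integration.integrable_bound)
    show "integrable M (\<lambda>w. \<omega>\<^sup>2)" by simp
    show "a t \<in> borel_measurable M" unfolding a_def using measurable_compose[OF sm gfm] by measurable
    show "AE w in M. norm (a t w) \<le> norm (\<omega>\<^sup>2)"
      using gbd \<omega>0 by (auto simp: a_def intro!: power_mono)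
  qed
  have XZ: "integrable M (dd t) \<and> (\<integral>w. dd t w \<partial>M) \<le> \<gamma>\<^sup>2 * W\<^sup>2 * G2" for t
    unfolding dd_def by (rule XZ_exp[OF qrP svdP rn nm q mu tau W])
  have UU: "integrable M (uu t) \<and> (\<integral>w. uu t w \<partial>M) \<le> \<sigma>2 / real N" for t
    unfolding uu_def by (rule E_u)
  have \<Phi>m: "\<Phi> \<in> borel_measurable borel"
  proof -
    have "(\<lambda>p::(real^('n::{finite,wellorder})^('m::{finite,wellorder})) \<times> (real^('n::{finite,wellorder})^('m::{finite,wellorder})) \<times> (real^('n::{finite,wellorder})^('m::{finite,wellorder})). fst p - (\<gamma> * \<mu>) *\<^sub>R fst (snd p) - \<gamma> *\<^sub>R snd (snd p)) \<in> borel_measurable borel"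
      by (intro borel_measurable_continuous_onI continuous_intros)
    from measurable_compose[OF this gfm]
    have m1: "(\<lambda>p::(real^('n::{finite,wellorder})^('m::{finite,wellorder})) \<times> (real^('n::{finite,wellorder})^('m::{finite,wellorder})) \<times> (real^('n::{finite,wellorder})^('m::{finite,wellorder})). grad_f (fst p - (\<gamma> * \<mu>) *\<^sub>R fst (snd p) - \<gamma> *\<^sub>R snd (snd p))) \<in> borel_measurable borel" .
    have "(\<lambda>p::(real^('n::{finite,wellorder})^('m::{finite,wellorder})) \<times> (real^('n::{finite,wellorder})^('m::{finite,wellorder})) \<times> (real^('n::{finite,wellorder})^('m::{finite,wellorder})). fst p) \<in> borel_measurable borel"
      by (intro borel_measurable_continuous_onI continuous_intros)
    from measurable_compose[OF this gfm]
    have m2: "(\<lambda>p::(real^('n::{finite,wellorder})^('m::{finite,wellorder})) \<times> (real^('n::{finite,wellorder})^('m::{finite,wellorder})) \<times> (real^('n::{finite,wellorder})^('m::{finite,wellorder})). grad_f (fst p)) \<in> borel_measurable borel" .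
    show ?thesis unfolding \<Phi>_def using m1 m2 by (intro borel_measurable_diff borel_measurable_scaleR borel_measurable_const)
  qed
  have \<Phi>b: "norm (\<Phi> p) \<le> \<omega> + L * \<gamma> * \<omega>" for p
  proof -
    have "norm (\<Phi> p) \<le> norm (grad_f (fst p - (\<gamma> * \<mu>) *\<^sub>R fst (snd p) - \<gamma> *\<^sub>R snd (snd p))) + norm ((L * \<gamma>) *\<^sub>R grad_f (fst p))"
      unfolding \<Phi>_def by (rule norm_triangle_ineq4)
    also have "\<dots> \<le> \<omega> + L * \<gamma> * \<omega>"
      using gbd L g by (intro add_mono) (auto intro!: mult_left_mono simp: abs_of_nonneg)
    finally show ?thesis .
  qed
  have VV: "integrable M (vv t) \<and> (\<integral>w. vv t w \<partial>M) = 0" for t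
    unfolding vv_def by (rule E_V[OF \<Phi>m \<Phi>b])
    have intR: "integrable M (\<lambda>w. \<Delta> + (\<Sum>t<T. \<gamma> * L\<^sup>2 / 2 * dd t w + L * \<gamma>\<^sup>2 / 2 * uu t w - \<gamma> * vv t w))"
    using XZ UU VV by (intro Bochner_Integration.integrable_add Bochner_Integration.integrable_sum
        Bochner_Integration.integrable_diff integrable_mult_right) auto
  have intL: "integrable M (\<lambda>w. \<gamma> / 4 * (\<Sum>t<T. a t w))"
    using int_a by (intro integrable_mult_right Bochner_Integration.integrable_sum) auto
  have "\<gamma> / 4 * (\<Sum>t<T. \<integral>w. a t w \<partial>M) = (\<integral>w. \<gamma> / 4 * (\<Sum>t<T. a t w) \<partial>M)"
    using int_a by (simp add: Bochner_Integration.integral_sum Bochner_Integration.integral_mult_right_zero)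
  also have "\<dots> \<le> (\<integral>w. \<Delta> + (\<Sum>t<T. \<gamma> * L\<^sup>2 / 2 * dd t w + L * \<gamma>\<^sup>2 / 2 * uu t w - \<gamma> * vv t w) \<partial>M)"
    using intL intR sumpath by (intro integral_mono) auto
  also have "\<dots> = \<Delta> + (\<Sum>t<T. \<gamma> * L\<^sup>2 / 2 * (\<integral>w. dd t w \<partial>M) + L * \<gamma>\<^sup>2 / 2 * (\<integral>w. uu t w \<partial>M) - \<gamma> * (\<integral>w. vv t w \<partial>M))"
  proof -
    have i1: "integrable M (\<lambda>w. \<Sum>t<T. \<gamma> * L\<^sup>2 / 2 * dd t w + L * \<gamma>\<^sup>2 / 2 * uu t w - \<gamma> * vv t w)"
      using XZ UU VV by (intro Bochner_Integration.integrable_sum Bochner_Integration.integrable_diff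
          Bochner_Integration.integrable_add integrable_mult_right) auto
    have "(\<integral>w. \<Delta> + (\<Sum>t<T. \<gamma> * L\<^sup>2 / 2 * dd t w + L * \<gamma>\<^sup>2 / 2 * uu t w - \<gamma> * vv t w) \<partial>M)
        = \<Delta> + (\<integral>w. (\<Sum>t<T. \<gamma> * L\<^sup>2 / 2 * dd t w + L * \<gamma>\<^sup>2 / 2 * uu t w - \<gamma> * vv t w) \<partial>M)"
      using i1 by (simp add: Bochner_Integration.integral_add P.prob_space)
    also have "(\<integral>w. (\<Sum>t<T. \<gamma> * L\<^sup>2 / 2 * dd t w + L * \<gamma>\<^sup>2 / 2 * uu t w - \<gamma> * vv t w) \<partial>M)
        = (\<Sum>t<T. (\<integral>w. \<gamma> * L\<^sup>2 / 2 * dd t w + L * \<gamma>\<^sup>2 / 2 * uu t w - \<gamma> * vv t w \<partial>M))"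
      using XZ UU VV by (intro Bochner_Integration.integral_sum Bochner_Integration.integrable_diff
          Bochner_Integration.integrable_add integrable_mult_right) auto
    also have "\<dots> = (\<Sum>t<T. \<gamma> * L\<^sup>2 / 2 * (\<integral>w. dd t w \<partial>M) + L * \<gamma>\<^sup>2 / 2 * (\<integral>w. uu t w \<partial>M) - \<gamma> * (\<integral>w. vv t w \<partial>M))"
      using XZ UU VV by (intro sum.cong refl)
        (simp add: Bochner_Integration.integral_diff Bochner_Integration.integral_add
          Bochner_Integration.integrable_diff Bochner_Integration.integrable_add)
    finally show ?thesis by simp
  qed
  also have "\<dots> \<le> \<Delta> + (\<Sum>t<T. \<gamma> * L\<^sup>2 / 2 * (\<gamma>\<^sup>2 * W\<^sup>2 * G2) + L * \<gamma>\<^sup>2 / 2 * (\<sigma>2 / real N) - \<gamma> * 0)"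
    using XZ UU VV g L
    by (intro add_left_mono sum_mono diff_mono add_mono mult_left_mono) auto
  also have "\<dots> = \<Delta> + real T * (\<gamma> * L\<^sup>2 / 2 * (\<gamma>\<^sup>2 * W\<^sup>2 * G2) + L * \<gamma>\<^sup>2 / 2 * (\<sigma>2 / real N))"
    by simp
  finally have key: "\<gamma> / 4 * (\<Sum>t<T. \<integral>w. a t w \<partial>M) \<le> \<Delta> + real T * (\<gamma> * L\<^sup>2 / 2 * (\<gamma>\<^sup>2 * W\<^sup>2 * G2) + L * \<gamma>\<^sup>2 / 2 * (\<sigma>2 / real N))" .
  have Tpos: "0 < real T" using T by simp
  have "(\<Sum>t<T. \<integral>w. a t w \<partial>M) / real T \<le> (4 / \<gamma>) * (\<Delta> + real T * (\<gamma> * L\<^sup>2 / 2 * (\<gamma>\<^sup>2 * W\<^sup>2 * G2) + L * \<gamma>\<^sup>2 / 2 * (\<sigma>2 / real N))) / real T"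
  proof (rule divide_right_mono)
    let ?S = "(\<Sum>t<T. \<integral>w. a t w \<partial>M)"
    have "?S = (4 / \<gamma>) * (\<gamma> / 4 * ?S)" using g by simp
    also have "\<dots> \<le> (4 / \<gamma>) * (\<Delta> + real T * (\<gamma> * L\<^sup>2 / 2 * (\<gamma>\<^sup>2 * W\<^sup>2 * G2) + L * \<gamma>\<^sup>2 / 2 * (\<sigma>2 / real N)))"
      using key g by (intro mult_left_mono) auto
    finally show "?S \<le> \<dots>" .
  qed (use Tpos in simp)
  also have "\<dots> = 4 * \<Delta> / (\<gamma> * real T) + 2 * L\<^sup>2 * \<gamma>\<^sup>2 * W\<^sup>2 * G2 + 2 * L * \<gamma> * \<sigma>2 / real N"
    using g Tpos by (simp add: field_simps power2_eq_square)
  finally show ?thesis unfolding a_def .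
qed

end


(* ---- Arith ---- *)


lemma cube_powr13: "0 \<le> (a::real) \<Longrightarrow> (a powr (1/3)) ^ 3 = a"
proof (cases "a = 0")
  case False
  assume "0 \<le> a"
  then have "a \<noteq> 0" using False by simp
  then have "(a powr (1/3)) ^ 3 = a powr (of_nat 3 * (1/3))" by (rule powr_power)
  then show ?thesis using \<open>0 \<le> a\<close> by simp
qed simp

lemma cube_powr23: "0 \<le> (a::real) \<Longrightarrow> (a powr (2/3)) ^ 3 = a ^ 2"
proof (cases "a = 0")
  case False
  assume a: "0 \<le> a"
  then have "a \<noteq> 0" using False by simp
  then have "(a powr (2/3)) ^ 3 = a powr (of_nat 3 * (2/3))" by (rule powr_power)
  also have "\<dots> = a powr (real 2)" by simp
  also have "\<dots> = a ^ 2" using a False by (intro powr_realpow) simp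
  finally show ?thesis .
qed simp

lemma final_arith:
  fixes b c d L s \<kappa> \<gamma> :: real
  assumes b: "0 < b" and c: "0 \<le> c" and d: "0 \<le> d" and L: "0 < L"
    and s: "s = sqrt (c / b)" and k: "0 \<le> \<kappa>" "\<kappa> ^ 3 = d / b"
    and g: "\<gamma> = 1 / (2 * L + s + \<kappa>)"
  shows "b / \<gamma> + c * \<gamma> + d * \<gamma>\<^sup>2 \<le> 2 * L * b + 2 * b * s + 2 * b * \<kappa>"
proof -
  have s0: "0 \<le> s" unfolding s using b c by simp
  have den: "0 < 2 * L + s + \<kappa>" using L s0 k by simp
  have g0: "0 < \<gamma>" unfolding g using den by simp
  have inv: "b / \<gamma> = b * (2 * L + s + \<kappa>)" unfolding g using den by simp
  have sg: "s * \<gamma> \<le> 1" unfolding g using den L k by (simp add: field_simps)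
  have kg: "\<kappa> * \<gamma> \<le> 1" unfolding g using den L s0 by (simp add: field_simps)
  have cs: "c = b * s\<^sup>2" unfolding s using b c by simp
  have dk: "d = b * \<kappa> ^ 3" using k b by simp
  have t1: "c * \<gamma> \<le> b * s"
  proof -
    have "c * \<gamma> = b * s * (s * \<gamma>)" unfolding cs by (simp add: power2_eq_square algebra_simps)
    also have "\<dots> \<le> b * s * 1" using sg b s0 by (intro mult_left_mono) auto
    finally show ?thesis by simp
  qed
  have t2: "d * \<gamma>\<^sup>2 \<le> b * \<kappa>"
  proof -
    have "d * \<gamma>\<^sup>2 = b * \<kappa> * (\<kappa> * \<gamma>)\<^sup>2" unfolding dk by (simp add: power2_eq_square power3_eq_cube algebra_simps)
    also have "(\<kappa> * \<gamma>)\<^sup>2 \<le> 1" using kg k g0 by (simp add: power_le_one)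
    then have "b * \<kappa> * (\<kappa> * \<gamma>)\<^sup>2 \<le> b * \<kappa> * 1" using b k by (intro mult_left_mono) auto
    finally show ?thesis by simp
  qed
  show ?thesis using inv t1 t2 by (simp add: algebra_simps)
qed


(* ---- main theorem ---- *)


theorem theorem2:
  fixes f :: "real^('n::{finite,wellorder})^('m::{finite,wellorder}) \<Rightarrow> real"
    and grad_f :: "real^('n::{finite,wellorder})^('m::{finite,wellorder}) \<Rightarrow> real^('n::{finite,wellorder})^('m::{finite,wellorder})"
    and fi :: "nat \<Rightarrow> real^('n::{finite,wellorder})^('m::{finite,wellorder}) \<Rightarrow> real"
    and grad_fi :: "nat \<Rightarrow> real^('n::{finite,wellorder})^('m::{finite,wellorder}) \<Rightarrow> real^('n::{finite,wellorder})^('m::{finite,wellorder})"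
    and F :: "real^('n::{finite,wellorder})^('m::{finite,wellorder}) \<Rightarrow> 'b \<Rightarrow> real"
    and gF :: "real^('n::{finite,wellorder})^('m::{finite,wellorder}) \<Rightarrow> 'b \<Rightarrow> real^('n::{finite,wellorder})^('m::{finite,wellorder})"
    and D :: "nat \<Rightarrow> 'b measure"
    and L \<sigma> \<omega> \<mu> :: real
    and N T \<tau> :: nat
    and X0 :: "real^('n::{finite,wellorder})^('m::{finite,wellorder})"
  assumes dims: "CARD('n::{finite,wellorder}) \<le> CARD('m::{finite,wellorder})" "1 \<le> CARD('r::{finite,wellorder})" "CARD('r::{finite,wellorder}) \<le> CARD('n::{finite,wellorder})"
    and mu: "0 \<le> \<mu>" "\<mu> < 1"
    and tau: "1 \<le> \<tau>"
    and nodes: "1 \<le> N"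
    and horizon: "1 \<le> T"
    (* (A1) *)
    and f_below: "bdd_below (range f)"
    and f_grad: "\<And>X. (f has_derivative (\<lambda>H. grad_f X \<bullet> H)) (at X)"
    and f_smooth: "\<And>X Y. norm (grad_f X - grad_f Y) \<le> L * norm (X - Y)"
    (* problem structure *)
    and f_avg: "\<And>X. f X = (\<Sum>i<N. fi i X) / real N"
    and fi_grad: "\<And>i X. i < N \<Longrightarrow> (fi i has_derivative (\<lambda>H. grad_fi i X \<bullet> H)) (at X)"
    and D_prob: "\<And>i. i < N \<Longrightarrow> prob_space (D i)"
    and fi_exp: "\<And>i X. i < N \<Longrightarrow> integrable (D i) (F X) \<and> fi i X = (\<integral>z. F X z \<partial>D i)"
    and F_grad: "\<And>X z. ((\<lambda>Y. F Y z) has_derivative (\<lambda>H. gF X z \<bullet> H)) (at X)"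
    and gF_meas: "\<And>i. i < N \<Longrightarrow> (\<lambda>(X, z). gF X z) \<in> borel_measurable (borel \<Otimes>\<^sub>M D i)"
    (* (A2) *)
    and unbiased: "\<And>i X. i < N \<Longrightarrow> integrable (D i) (gF X) \<and> (\<integral>z. gF X z \<partial>D i) = grad_fi i X"
    and variance: "\<And>i X. i < N \<Longrightarrow>
        (\<integral>\<^sup>+z. ennreal ((norm (gF X z - grad_fi i X))\<^sup>2) \<partial>D i) \<le> ennreal (\<sigma>\<^sup>2)"
    (* (A3) *)
    and grad_bound: "\<And>X. (norm (grad_f X))\<^sup>2 \<le> \<omega>\<^sup>2"
    and second_moment: "\<And>X. (\<integral>\<^sup>+z. ennreal ((norm ((1 / real N) *\<^sub>R (\<Sum>i<N. gF X (z i))))\<^sup>2)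
        \<partial>(PiM {..<N} D)) \<le> ennreal (\<sigma>\<^sup>2 + \<omega>\<^sup>2)"
    (* nondegeneracy, see NOTES *)
    and gap_pos: "f X0 > (INF X. f X)"
  shows "\<exists>\<eta>>0. \<forall>(M :: 'a measure) (\<xi> :: nat \<Rightarrow> nat \<Rightarrow> 'a \<Rightarrow> 'b)
            (qr :: real^('r::{finite,wellorder})^('m::{finite,wellorder}) \<Rightarrow> real^('r::{finite,wellorder})^('m::{finite,wellorder})) (svd :: real^('n::{finite,wellorder})^('m::{finite,wellorder}) \<Rightarrow> real^('r::{finite,wellorder})^('m::{finite,wellorder}))
            (Q0 :: real^('r::{finite,wellorder})^('n::{finite,wellorder})).
         prob_space M
         \<and> (\<forall>t. \<forall>i<N. \<xi> t i \<in> measurable M (D i) \<and> distr M (D i) (\<xi> t i) = D i)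
         \<and> prob_space.indep_vars M (\<lambda>(t, i). D i) (\<lambda>(t, i). \<xi> t i) (UNIV \<times> {..<N})
         \<and> (\<forall>A. is_econ_QR A (qr A)) \<and> (\<forall>A. is_top_left_sv A (svd A))
         \<and> qr \<in> borel_measurable borel \<and> svd \<in> borel_measurable borel
         \<longrightarrow>
         (\<Sum>t<T. \<integral>w. (norm (grad_f (psgd_X qr svd \<tau> \<eta> \<mu> N gF X0 Q0 (\<lambda>t i. \<xi> t i w) t)))\<^sup>2 \<partial>M)
           / real T
         \<le> sqrt (32 * L * \<sigma>\<^sup>2 * (f X0 - (INF X. f X)) / (real N * real T))
           + 8 * L * (f X0 - (INF X. f X)) / real T
           + 6 * 274 powr (1/3)
               * (L * real \<tau> * sqrt (\<sigma>\<^sup>2 + \<omega>\<^sup>2) * (f X0 - (INF X. f X))) powr (2/3)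
             / (real T powr (2/3) * (real CARD('r::{finite,wellorder}) / real CARD('n::{finite,wellorder})) powr (2/3)
                * (1 - \<mu>) powr (2/3))"
  proof -
  define \<Delta> where "\<Delta> = f X0 - (INF X. f X)"
  have \<Delta>pos: "0 < \<Delta>" unfolding \<Delta>_def using gap_pos by simp
  have f_low: "f X0 - f X \<le> \<Delta>" for X
  proof -
    have "(INF X. f X) \<le> f X" by (rule cINF_lower[OF f_below]) simp
    then show ?thesis unfolding \<Delta>_def by simp
  qed
  have gbd: "norm (grad_f X) \<le> \<bar>\<omega>\<bar>" for X
  proof -
    have "(norm (grad_f X))\<^sup>2 \<le> \<bar>\<omega>\<bar>\<^sup>2" using grad_bound[of X] by simp
    then show ?thesis by (rule power2_le_imp_le) simp
  qed
  have L0: "0 \<le> L"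
  proof -
    define e :: "real^('n::{finite,wellorder})^('m::{finite,wellorder})" where "e = (\<chi> i j. 1)"
    have "e \<noteq> 0" unfolding e_def by (simp add: vec_eq_iff)
    then have ne: "0 < norm e" by simp
    have "0 \<le> L * norm ((X0 + e) - X0)" using f_smooth[of "X0 + e" X0] norm_ge_zero order_trans by blast
    then have "0 \<le> L * norm e" by simp
    then show ?thesis using ne by (simp add: zero_le_mult_iff)
  qed
  define \<delta> where "\<delta> = real CARD('r::{finite,wellorder}) / real CARD('n::{finite,wellorder})"
  have \<delta>pos: "0 < \<delta>" unfolding \<delta>_def by simp
  have \<delta>1: "\<delta> \<le> 1" unfolding \<delta>_def using dims by (simp add: divide_le_eq_1)
  define q where "q = sqrt (1 - \<delta>)"
  have q0: "0 \<le> q" unfolding q_def using \<delta>1 by simp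
  have q_le: "q \<le> 1 - \<delta> / 2"
  proof -
    have "q \<le> sqrt ((1 - \<delta> / 2)\<^sup>2)" unfolding q_def
      by (rule real_sqrt_le_mono) (simp add: power2_eq_square algebra_simps)
    also have "\<dots> = 1 - \<delta> / 2" using \<delta>1 by simp
    finally show ?thesis .
  qed
  have q1: "q < 1" using q_le \<delta>pos by simp
  define W where "W = (1 + real \<tau> / (1 - q)) / (1 - \<mu>)"
  define W' where "W' = 3 * real \<tau> / (\<delta> * (1 - \<mu>))"
  have W0: "0 \<le> W" unfolding W_def using q1 mu by simp
  have WW': "W \<le> W'"
  proof -
    have "real \<tau> / (1 - q) \<le> real \<tau> / (\<delta> / 2)"
      using q_le \<delta>pos by (intro divide_left_mono) auto
    also have "\<dots> = 2 * real \<tau> / \<delta>" by simp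
    finally have a: "real \<tau> / (1 - q) \<le> 2 * real \<tau> / \<delta>" .
    have "1 \<le> real \<tau> / \<delta>" using tau \<delta>1 \<delta>pos by (simp add: le_divide_eq)
    then have "1 + real \<tau> / (1 - q) \<le> 3 * real \<tau> / \<delta>" using a by simp
    then have "(1 + real \<tau> / (1 - q)) / (1 - \<mu>) \<le> (3 * real \<tau> / \<delta>) / (1 - \<mu>)"
      using mu by (intro divide_right_mono) auto
    then show ?thesis unfolding W_def W'_def by simp
  qed
  define RHS where "RHS = sqrt (32 * L * \<sigma>\<^sup>2 * (f X0 - (INF X. f X)) / (real N * real T))
           + 8 * L * (f X0 - (INF X. f X)) / real T
           + 6 * 274 powr (1/3)
               * (L * real \<tau> * sqrt (\<sigma>\<^sup>2 + \<omega>\<^sup>2) * (f X0 - (INF X. f X))) powr (2/3)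
             / (real T powr (2/3) * (real CARD('r::{finite,wellorder}) / real CARD('n::{finite,wellorder})) powr (2/3)
                * (1 - \<mu>) powr (2/3))"
  show ?thesis
  proof (cases "L = 0")
    case True
    have sm0: "\<And>X Y. norm (grad_f X - grad_f Y) \<le> 0 * norm (X - Y)" using f_smooth True by simp
    have gz: "grad_f X = 0" for X by (rule grad_zero_if_L0[OF f_grad sm0 f_below])
    show ?thesis
      by (rule exI[of _ "1::real"]) (simp add: gz True)
  next
    case False
    then have Lpos: "0 < L" using L0 by simp
    define G2 where "G2 = \<sigma>\<^sup>2 + \<omega>\<^sup>2"
    have G20: "0 \<le> G2" unfolding G2_def by simp
    define b where "b = 4 * \<Delta> / real T"
    define c where "c = 2 * L * \<sigma>\<^sup>2 / real N"
    define d where "d = 2 * L\<^sup>2 * W'\<^sup>2 * G2"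
    define s where "s = sqrt (c / b)"
    define \<kappa> where "\<kappa> = (d / b) powr (1/3)"
    define \<gamma> where "\<gamma> = 1 / (2 * L + s + \<kappa>)"
    define \<eta> where "\<eta> = \<gamma> * (1 - \<mu>)"
    have Tpos: "0 < real T" using horizon by simp
    have Npos: "0 < real N" using nodes by simp
    have b0: "0 < b" unfolding b_def using \<Delta>pos Tpos by simp
    have c0: "0 \<le> c" unfolding c_def using L0 by simp
    have d0: "0 \<le> d" unfolding d_def using G20 by simp
    have s0: "0 \<le> s" unfolding s_def using b0 c0 by simp
    have k0: "0 \<le> \<kappa>" unfolding \<kappa>_def by simp
    have k3: "\<kappa> ^ 3 = d / b" unfolding \<kappa>_def using d0 b0 by (intro cube_powr13) simp
    have den: "0 < 2 * L + s + \<kappa>" using Lpos s0 k0 by simp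
    have g0: "0 < \<gamma>" unfolding \<gamma>_def using den by simp
    have Lg: "L * \<gamma> \<le> 1 / 2" unfolding \<gamma>_def using den Lpos s0 k0 by (simp add: field_simps)
    have eta0: "0 < \<eta>" unfolding \<eta>_def using g0 mu by simp
        have arith: "4 * \<Delta> / (\<gamma> * real T) + 2 * L\<^sup>2 * \<gamma>\<^sup>2 * W\<^sup>2 * G2 + 2 * L * \<gamma> * \<sigma>\<^sup>2 / real N \<le> RHS"
    proof -
      have e1: "4 * \<Delta> / (\<gamma> * real T) = b / \<gamma>" unfolding b_def by simp
      have e2: "2 * L * \<gamma> * \<sigma>\<^sup>2 / real N = c * \<gamma>" unfolding c_def by simp
      have e3: "2 * L\<^sup>2 * \<gamma>\<^sup>2 * W\<^sup>2 * G2 \<le> d * \<gamma>\<^sup>2"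
      proof -
        have "W\<^sup>2 \<le> W'\<^sup>2" using W0 WW' by (intro power_mono) auto
        then have "2 * L\<^sup>2 * \<gamma>\<^sup>2 * G2 * W\<^sup>2 \<le> 2 * L\<^sup>2 * \<gamma>\<^sup>2 * G2 * W'\<^sup>2" using G20 by (intro mult_left_mono) auto
        then show ?thesis unfolding d_def by (simp add: algebra_simps)
      qed
      have fa: "b / \<gamma> + c * \<gamma> + d * \<gamma>\<^sup>2 \<le> 2 * L * b + 2 * b * s + 2 * b * \<kappa>"
        by (rule final_arith[OF b0 c0 d0 Lpos s_def k0 k3 \<gamma>_def])
      have r1: "2 * L * b = 8 * L * \<Delta> / real T" unfolding b_def by simp
      have r2: "2 * b * s = sqrt (32 * L * \<sigma>\<^sup>2 * \<Delta> / (real N * real T))"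
      proof -
        have sq: "sqrt ((2 * b)\<^sup>2) = 2 * b" using b0 by (subst real_sqrt_abs) simp
        have "2 * b * s = sqrt ((2 * b)\<^sup>2) * sqrt (c / b)" by (simp only: sq s_def)
        also have "\<dots> = sqrt ((2 * b)\<^sup>2 * (c / b))" by (rule real_sqrt_mult[symmetric])
        also have "(2 * b)\<^sup>2 * (c / b) = 32 * L * \<sigma>\<^sup>2 * \<Delta> / (real N * real T)"
          unfolding b_def c_def using Tpos Npos \<Delta>pos by (simp add: field_simps power2_eq_square)
        finally show ?thesis .
      qed
      define R3 where "R3 = 6 * 274 powr (1/3)
               * (L * real \<tau> * sqrt (\<sigma>\<^sup>2 + \<omega>\<^sup>2) * \<Delta>) powr (2/3)
             / (real T powr (2/3) * (real CARD(('r::{finite,wellorder})) / real CARD(('n::{finite,wellorder}))) powr (2/3)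
                * (1 - \<mu>) powr (2/3))"
      have r3: "2 * b * \<kappa> \<le> R3"
      proof -
        define Y where "Y = L * real \<tau> * sqrt (\<sigma>\<^sup>2 + \<omega>\<^sup>2) * \<Delta>"
        have Y0: "0 \<le> Y" unfolding Y_def using L0 \<Delta>pos by simp
        have R30: "0 \<le> R3" unfolding R3_def Y_def[symmetric] using Y0 by simp
        have cubeR: "R3 ^ 3 = 216 * 274 * Y\<^sup>2 / ((real T)\<^sup>2 * \<delta>\<^sup>2 * (1 - \<mu>)\<^sup>2)"
        proof -
          have "R3 ^ 3 = 6 ^ 3 * (274 powr (1/3)) ^ 3 * (Y powr (2/3)) ^ 3
              / ((real T powr (2/3)) ^ 3 * (\<delta> powr (2/3)) ^ 3 * ((1 - \<mu>) powr (2/3)) ^ 3)"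
            unfolding R3_def Y_def[symmetric] \<delta>_def[symmetric] by (simp add: power_mult_distrib power_divide)
          also have "\<dots> = 216 * 274 * Y\<^sup>2 / ((real T)\<^sup>2 * \<delta>\<^sup>2 * (1 - \<mu>)\<^sup>2)"
            using Y0 \<delta>pos mu by (simp add: cube_powr13 cube_powr23)
          finally show ?thesis .
        qed
        have cubeL: "(2 * b * \<kappa>) ^ 3 = 2304 * Y\<^sup>2 / ((real T)\<^sup>2 * \<delta>\<^sup>2 * (1 - \<mu>)\<^sup>2)"
        proof -
          have "(2 * b * \<kappa>) ^ 3 = 8 * b ^ 3 * (d / b)" by (simp add: power_mult_distrib k3)
          also have "\<dots> = 8 * b\<^sup>2 * d" using b0 by (simp add: power2_eq_square power3_eq_cube)
          also have "\<dots> = 2304 * Y\<^sup>2 / ((real T)\<^sup>2 * \<delta>\<^sup>2 * (1 - \<mu>)\<^sup>2)"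
            unfolding b_def d_def W'_def G2_def Y_def using Tpos \<delta>pos mu
            by (simp add: field_simps power2_eq_square)
          finally show ?thesis .
        qed
        have "(2 * b * \<kappa>) ^ Suc 2 \<le> R3 ^ Suc 2"
        proof -
          have "0 \<le> Y\<^sup>2 / ((real T)\<^sup>2 * \<delta>\<^sup>2 * (1 - \<mu>)\<^sup>2)" by simp
          then have "2304 * (Y\<^sup>2 / ((real T)\<^sup>2 * \<delta>\<^sup>2 * (1 - \<mu>)\<^sup>2)) \<le> (216 * 274) * (Y\<^sup>2 / ((real T)\<^sup>2 * \<delta>\<^sup>2 * (1 - \<mu>)\<^sup>2))"
            by (intro mult_right_mono) auto
          then show ?thesis using cubeL cubeR by (simp add: numeral_3_eq_3[symmetric])
        qed
        then show ?thesis using R30 by (rule power_le_imp_le_base)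
      qed
      have "4 * \<Delta> / (\<gamma> * real T) + 2 * L\<^sup>2 * \<gamma>\<^sup>2 * W\<^sup>2 * G2 + 2 * L * \<gamma> * \<sigma>\<^sup>2 / real N \<le> b / \<gamma> + c * \<gamma> + d * \<gamma>\<^sup>2"
        using e1 e2 e3 by linarith
      also have "\<dots> \<le> 2 * L * b + 2 * b * s + 2 * b * \<kappa>" by (rule fa)
      also have "\<dots> \<le> RHS" unfolding RHS_def \<Delta>_def[symmetric] using r1 r2 r3 R3_def by linarith
      finally show ?thesis .
    qed
    show ?thesis
    proof (rule exI[of _ \<eta>], intro conjI allI impI)
      show "0 < \<eta>" by (rule eta0)
      fix M :: "'a measure" and \<xi> :: "nat \<Rightarrow> nat \<Rightarrow> 'a \<Rightarrow> 'b"
        and qr :: "real^('r::{finite,wellorder})^('m::{finite,wellorder}) \<Rightarrow> real^('r::{finite,wellorder})^('m::{finite,wellorder})" and svd :: "real^('n::{finite,wellorder})^('m::{finite,wellorder}) \<Rightarrow> real^('r::{finite,wellorder})^('m::{finite,wellorder})"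
        and Q0 :: "real^('r::{finite,wellorder})^('n::{finite,wellorder})"
      assume H: "prob_space M
         \<and> (\<forall>t. \<forall>i<N. \<xi> t i \<in> measurable M (D i) \<and> distr M (D i) (\<xi> t i) = D i)
         \<and> prob_space.indep_vars M (\<lambda>(t, i). D i) (\<lambda>(t, i). \<xi> t i) (UNIV \<times> {..<N})
         \<and> (\<forall>A. is_econ_QR A (qr A)) \<and> (\<forall>A. is_top_left_sv A (svd A))
         \<and> qr \<in> borel_measurable borel \<and> svd \<in> borel_measurable borel"
      have bound: "(\<Sum>t<T. \<integral>w. (norm (grad_f (psgd_X qr svd \<tau> \<eta> \<mu> N gF X0 Q0 (\<lambda>t i. \<xi> t i w) t)))\<^sup>2 \<partial>M) / real T \<le> RHS"
      proof -
        have Mp: "prob_space M" using H by blast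
        have \<xi>m: "\<And>t i. i < N \<Longrightarrow> \<xi> t i \<in> measurable M (D i)" using H by blast
        have \<xi>d: "\<And>t i. i < N \<Longrightarrow> distr M (D i) (\<xi> t i) = D i" using H by blast
        have ind: "prob_space.indep_vars M (\<lambda>(t, i). D i) (\<lambda>(t, i). \<xi> t i) (UNIV \<times> {..<N})" using H by blast
        have qrP: "\<And>A. is_econ_QR A (qr A)" using H by blast
        have svdP: "\<And>A. is_top_left_sv A (svd A)" using H by blast
        have qrm: "qr \<in> borel_measurable borel" using H by blast
        have svdm: "svd \<in> borel_measurable borel" using H by blast
        have gavg: "\<And>X. grad_f X = (1 / real N) *\<^sub>R (\<Sum>i<N. grad_fi i X)"
          by (rule grad_avg[OF f_grad f_avg fi_grad nodes])
        have gfm: "grad_f \<in> borel_measurable borel"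
        proof -
          have "L-lipschitz_on UNIV grad_f"
            by (rule lipschitz_onI) (use f_smooth L0 in \<open>auto simp: dist_norm\<close>)
          then have "continuous_on UNIV grad_f" by (rule lipschitz_on_continuous_on)
          then show ?thesis by (rule borel_measurable_continuous_onI)
        qed
        interpret S: setting qr svd \<tau> \<eta> \<mu> N gF X0 Q0 M \<xi> D grad_fi grad_f "\<sigma>\<^sup>2" "\<sigma>\<^sup>2 + \<omega>\<^sup>2"
          by (rule setting.intro[OF Mp nodes \<xi>m \<xi>d ind D_prob gF_meas qrm svdm unbiased variance _ second_moment _ gavg gfm]) simp_all
        have q': "q = sqrt (1 - real CARD(('r::{finite,wellorder})) / real CARD(('n::{finite,wellorder})))" unfolding q_def \<delta>_def ..
        have MB: "(\<Sum>t<T. \<integral>w. (norm (grad_f (S.sX (S.xw w) t)))\<^sup>2 \<partial>M) / real T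
            \<le> 4 * \<Delta> / (\<gamma> * real T) + 2 * L\<^sup>2 * \<gamma>\<^sup>2 * W\<^sup>2 * (\<sigma>\<^sup>2 + \<omega>\<^sup>2) + 2 * L * \<gamma> * \<sigma>\<^sup>2 / real N"
          by (rule S.main_bound[OF f_grad f_smooth f_low gbd qrP svdP dims(3) dims(1) q' mu tau W_def \<eta>_def g0 L0 Lg horizon])
        have eqX: "psgd_X qr svd \<tau> \<eta> \<mu> N gF X0 Q0 (\<lambda>t i. \<xi> t i w) t = S.sX (S.xw w) t" for w t
          by (simp add: S.psgd_X_eq S.xw_def)
        show ?thesis using MB arith unfolding eqX G2_def by linarith
      qed
      then show "(\<Sum>t<T. \<integral>w. (norm (grad_f (psgd_X qr svd \<tau> \<eta> \<mu> N gF X0 Q0 (\<lambda>t i. \<xi> t i w) t)))\<^sup>2 \<partial>M) / real T \<le> sqrt (32 * L * \<sigma>\<^sup>2 * (f X0 - (INF X. f X)) / (real N * real T))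
           + 8 * L * (f X0 - (INF X. f X)) / real T
           + 6 * 274 powr (1/3)
               * (L * real \<tau> * sqrt (\<sigma>\<^sup>2 + \<omega>\<^sup>2) * (f X0 - (INF X. f X))) powr (2/3)
             / (real T powr (2/3) * (real CARD('r::{finite,wellorder}) / real CARD('n::{finite,wellorder})) powr (2/3)
                * (1 - \<mu>) powr (2/3))"
        unfolding RHS_def .
    qed

  qed
qed

end
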